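(* Let $i\in[n]$, let $S^\ast\subseteq[n]\setminus\{i\}$, and let $\mathcal{G}$ be a DAG on $[n]$ such that the induced subgraph $\mathcal{G}|_{S^\ast}$ has no edges. Let $\mathcal{H}$ be the graph identical to $\mathcal{G}$ but with all the edges $j\to i$ for $j\in S^\ast$. If $\mathcal{H}$ is a DAG, then $\operatorname{conv}(c_\mathcal{G},c_\mathcal{H})$ is an edge of $\mathrm{CIM}_n$.
   Context: For a directed acyclic graph (DAG) $\mathcal{G}$ on vertex set $[n]=\{1,\dots,n\}$, the characteristic imset $c_\mathcal{G}$ is the 0/1-vector indexed by the subsets $S\subseteq[n]$ with $|S|\geq 2$, with $c_\mathcal{G}(S)=1$ if there exists $i\in S$ such that $S\subseteq \mathrm{pa}_\mathcal{G}(i)\cup\{i\}$ (where $\mathrm{pa}_\mathcal{G}(i)$ is the set of parents of $i$), and $c_\mathcal{G}(S)=0$ otherwise. The characteristic imset polytope is $\mathrm{CIM}_n=\operatorname{conv}(c_\mathcal{G}\colon \mathcal{G}\text{ a DAG on }[n])$. *)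

theory Defs
  imports "HOL-Analysis.Analysis"
begin

text \<open>The vertex set [n] is represented by a finite type 'n (n = CARD('n)).
  A directed graph is an edge relation E :: ('n \<times> 'n) set, (j,i) \<in> E meaning j \<rightarrow> i.\<close>

definition is_dag :: "('n \<times> 'n) set \<Rightarrow> bool" where
  "is_dag E \<longleftrightarrow> acyclic E"

definition pa :: "('n \<times> 'n) set \<Rightarrow> 'n \<Rightarrow> 'n set" where
  "pa E i = {j. (j, i) \<in> E}"

text \<open>Coordinates are indexed by all subsets of [n]; the coordinates
  with card S < 2 (not part of the paper's vector) are fixed to 0, an injective affine
  embedding of the paper's space which preserves the face structure.\<close>
definition char_imset :: "('n::finite \<times> 'n) set \<Rightarrow> real ^ ('n set)" where
  "char_imset E = (\<chi> S. if 2 \<le> card S \<and> (\<exists>i\<in>S. S \<subseteq> pa E i \<union> {i}) then 1 else 0)"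

definition CIM :: "(real ^ ('n::finite set)) set" where
  "CIM = convex hull {char_imset E | E :: ('n \<times> 'n) set. is_dag E}"

definition is_edge_of :: "'a::euclidean_space set \<Rightarrow> 'a set \<Rightarrow> bool" where
  "is_edge_of F P \<longleftrightarrow> F face_of P \<and> aff_dim F = 1"

end

theory Submission
  imports Defs
begin


definition fam :: "('n \<times> 'n) set \<Rightarrow> 'n set \<Rightarrow> bool" where
  "fam E S \<longleftrightarrow> (\<exists>k\<in>S. S \<subseteq> pa E k \<union> {k})"

definition adj :: "('n \<times> 'n) set \<Rightarrow> 'n \<Rightarrow> 'n \<Rightarrow> bool" where
  "adj E u v \<longleftrightarrow> (u,v) \<in> E \<or> (v,u) \<in> E"

lemma ci_nth: "char_imset E $ S = (if 2 \<le> card S \<and> fam E S then 1 else 0)"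
  by (simp add: char_imset_def fam_def)

lemma fam_iff: "fam E S \<longleftrightarrow> (\<exists>k\<in>S. \<forall>z\<in>S. z \<noteq> k \<longrightarrow> (z,k) \<in> E)"
  by (auto simp: fam_def pa_def)

lemma card_ge2:
  fixes S :: "'n::finite set"
  assumes "a \<in> S" "b \<in> S" "a \<noteq> b" shows "2 \<le> card S"
proof -
  have "{a,b} \<subseteq> S" using assms by auto
  hence "card {a,b} \<le> card S" by (simp add: card_mono)
  thus ?thesis using assms by simp
qed

lemma ci_eq:
  fixes E :: "('n::finite \<times> 'n) set"
  assumes "a \<in> S" "b \<in> S" "a \<noteq> b"
  shows "char_imset E $ S = (if fam E S then 1 else 0)"
  using card_ge2[OF assms] by (simp add: ci_nth)

lemma fam_pair: "u \<noteq> v \<Longrightarrow> fam E {u,v} \<longleftrightarrow> adj E u v"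
  by (auto simp: fam_iff adj_def)

lemma fam_designated:
  assumes "w \<in> S" "\<And>k. k \<in> S \<Longrightarrow> k \<noteq> w \<Longrightarrow> \<exists>z\<in>S. z \<noteq> k \<and> (z,k) \<notin> E"
  shows "fam E S \<longleftrightarrow> (\<forall>z\<in>S. z \<noteq> w \<longrightarrow> (z,w) \<in> E)"
proof
  assume "fam E S"
  then obtain k where k: "k \<in> S" "\<forall>z\<in>S. z \<noteq> k \<longrightarrow> (z,k) \<in> E" by (auto simp: fam_iff)
  have "k = w"
  proof (rule ccontr)
    assume "k \<noteq> w"
    then obtain z where "z \<in> S" "z \<noteq> k" "(z,k) \<notin> E" using assms(2) k(1) by blast
    thus False using k by blast
  qed
  thus "\<forall>z\<in>S. z \<noteq> w \<longrightarrow> (z,w) \<in> E" using k by blast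
next
  assume "\<forall>z\<in>S. z \<noteq> w \<longrightarrow> (z,w) \<in> E"
  thus "fam E S" using assms(1) by (auto simp: fam_iff)
qed

lemma sink_exists:
  fixes E :: "('n::finite \<times> 'n) set"
  assumes "acyclic E" "S \<noteq> {}"
  shows "\<exists>s\<in>S. \<forall>z\<in>S. (s,z) \<notin> E"
proof -
  have fin: "finite (E\<inverse>)" by simp
  have ac: "acyclic (E\<inverse>)" using assms(1) by (simp add: acyclic_converse)
  have "wf (E\<inverse>)" by (rule finite_acyclic_wf[OF fin ac])
  then obtain s where s: "s\<in>S" "\<And>y. (y,s)\<in>E\<inverse> \<Longrightarrow> y \<notin> S"
    using assms(2) unfolding wf_eq_minimal by blast
  show ?thesis using s by blast
qed

lemma acyc_irrefl: "acyclic E \<Longrightarrow> (x,x) \<notin> E"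
  unfolding acyclic_def by blast

lemma acyc_asym: "acyclic E \<Longrightarrow> (x,y) \<in> E \<Longrightarrow> (y,x) \<notin> E"
proof
  assume "acyclic E" "(x,y) \<in> E" "(y,x) \<in> E"
  hence "(x,x) \<in> E\<^sup>+" by (meson r_into_trancl trancl_into_trancl)
  thus False using \<open>acyclic E\<close> unfolding acyclic_def by blast
qed


lemma triangle:
  fixes E :: "('n::finite \<times> 'n) set"
  assumes "acyclic E" "a \<noteq> b" "a \<noteq> c" "b \<noteq> c" "adj E a b" "adj E a c" "adj E b c"
  shows "fam E {a,b,c}"
proof -
  obtain s where s: "s \<in> {a,b,c}" "\<forall>z\<in>{a,b,c}. (s,z) \<notin> E" using sink_exists[OF assms(1), of "{a,b,c}"] by auto
  have "\<forall>z\<in>{a,b,c}. z \<noteq> s \<longrightarrow> (z,s) \<in> E" using s assms(5-7) by (auto simp: adj_def)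
  thus ?thesis using s(1) by (auto simp: fam_iff)
qed

lemma fam_witness:
  assumes "k \<in> T" "\<forall>z\<in>T. z \<noteq> k \<longrightarrow> (z,k) \<in> E"
  shows "fam E T"
  unfolding fam_iff using assms by (intro bexI[of _ k]) auto

lemma fam_char:
  fixes E :: "('n::finite \<times> 'n) set"
  assumes "acyclic E"
  shows "fam E S \<longleftrightarrow> (\<exists>k\<in>S. (\<forall>a\<in>S. a \<noteq> k \<longrightarrow> fam E {a,k}) \<and>
            (\<forall>a\<in>S. \<forall>b\<in>S. a \<noteq> k \<longrightarrow> b \<noteq> k \<longrightarrow> a \<noteq> b \<longrightarrow> fam E {a,b,k}))"
proof
  assume "fam E S"
  then obtain k where k: "k \<in> S" "\<forall>z\<in>S. z \<noteq> k \<longrightarrow> (z,k) \<in> E" unfolding fam_iff by blast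
  have "\<forall>a\<in>S. a \<noteq> k \<longrightarrow> fam E {a,k}"
  proof (intro ballI impI)
    fix a assume "a \<in> S" "a \<noteq> k"
    show "fam E {a,k}" by (rule fam_witness[of k]) (use k \<open>a \<in> S\<close> in auto)
  qed
  moreover have "\<forall>a\<in>S. \<forall>b\<in>S. a \<noteq> k \<longrightarrow> b \<noteq> k \<longrightarrow> a \<noteq> b \<longrightarrow> fam E {a,b,k}"
  proof (intro ballI impI)
    fix a b assume "a \<in> S" "b \<in> S" "a \<noteq> k" "b \<noteq> k" "a \<noteq> b"
    show "fam E {a,b,k}" by (rule fam_witness[of k]) (use k \<open>a \<in> S\<close> \<open>b \<in> S\<close> in auto)
  qed
  ultimately show "\<exists>k\<in>S. (\<forall>a\<in>S. a \<noteq> k \<longrightarrow> fam E {a,k}) \<and>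
            (\<forall>a\<in>S. \<forall>b\<in>S. a \<noteq> k \<longrightarrow> b \<noteq> k \<longrightarrow> a \<noteq> b \<longrightarrow> fam E {a,b,k})" using k(1) by blast
next
  assume "\<exists>k\<in>S. (\<forall>a\<in>S. a \<noteq> k \<longrightarrow> fam E {a,k}) \<and>
            (\<forall>a\<in>S. \<forall>b\<in>S. a \<noteq> k \<longrightarrow> b \<noteq> k \<longrightarrow> a \<noteq> b \<longrightarrow> fam E {a,b,k})"
  then obtain k where k: "k \<in> S" "\<forall>a\<in>S. a \<noteq> k \<longrightarrow> fam E {a,k}"
     "\<forall>a\<in>S. \<forall>b\<in>S. a \<noteq> k \<longrightarrow> b \<noteq> k \<longrightarrow> a \<noteq> b \<longrightarrow> fam E {a,b,k}" by (elim bexE conjE) (rule that)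
  have "S \<noteq> {}" using k(1) by blast
  then obtain s where s: "s \<in> S" "\<forall>z\<in>S. (s,z) \<notin> E" using sink_exists[OF assms] by blast
  show "fam E S"
  proof (cases "s = k")
    case True
    have "\<forall>a\<in>S. a \<noteq> k \<longrightarrow> (a,k) \<in> E"
    proof (intro ballI impI)
      fix a assume "a \<in> S" "a \<noteq> k"
      hence "fam E {a,k}" using k(2) by simp
      hence "adj E a k" using fam_pair[OF \<open>a \<noteq> k\<close>] by simp
      thus "(a,k) \<in> E" using s True \<open>a \<in> S\<close> by (auto simp: adj_def)
    qed
    thus ?thesis using k(1) by (intro fam_witness[of k]) auto
  next
    case False
    have ks: "(k,s) \<in> E"
    proof -
      have "fam E {s,k}" using k(2) s(1) False by simp
      hence "adj E s k" using fam_pair[OF False] by simp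
      thus ?thesis using s k(1) by (auto simp: adj_def)
    qed
    have "\<forall>a\<in>S. a \<noteq> s \<longrightarrow> (a,s) \<in> E"
    proof (intro ballI impI)
      fix a assume a: "a \<in> S" "a \<noteq> s"
      show "(a,s) \<in> E"
      proof (cases "a = k")
        case True thus ?thesis using ks by simp
      next
        case ak: False
        have "fam E {a,s,k}" using k(3) a s(1) ak False by simp
        then obtain w where w: "w \<in> {a,s,k}" "\<forall>z\<in>{a,s,k}. z \<noteq> w \<longrightarrow> (z,w) \<in> E" unfolding fam_iff by blast
        have "w = s"
        proof (rule ccontr)
          assume "w \<noteq> s"
          hence "(s,w) \<in> E" using w by auto
          moreover have "w \<in> S" using w(1) a(1) k(1) s(1) by auto
          ultimately show False using s(2) by blast
        qed
        thus ?thesis using w a by auto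
      qed
    qed
    thus ?thesis using s(1) by (intro fam_witness[of s]) auto
  qed
qed

lemma ci_eq_from_23:
  fixes E E' :: "('n::finite \<times> 'n) set"
  assumes "acyclic E" "acyclic E'"
    and eq: "\<And>S. card S = 2 \<or> card S = 3 \<Longrightarrow> char_imset E $ S = char_imset E' $ S"
  shows "char_imset E = char_imset E'"
proof -
  have f2: "fam E {a,k} \<longleftrightarrow> fam E' {a,k}" if "a \<noteq> k" for a k
  proof -
    have "card {a,k} = 2" using that by simp
    hence "char_imset E $ {a,k} = char_imset E' $ {a,k}" using eq by blast
    thus ?thesis using that by (simp add: ci_nth split: if_splits)
  qed
  have f3: "fam E {a,b,k} \<longleftrightarrow> fam E' {a,b,k}" if "a \<noteq> k" "b \<noteq> k" "a \<noteq> b" for a b k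
  proof -
    have "card {a,b,k} = 3" using that by simp
    hence "char_imset E $ {a,b,k} = char_imset E' $ {a,b,k}" using eq by blast
    thus ?thesis using that by (simp add: ci_nth split: if_splits)
  qed
  have "fam E S \<longleftrightarrow> fam E' S" for S
  proof -
    have "(\<forall>a\<in>S. a \<noteq> k \<longrightarrow> fam E {a,k}) \<longleftrightarrow> (\<forall>a\<in>S. a \<noteq> k \<longrightarrow> fam E' {a,k})" for k
      using f2 by auto
    moreover have "(\<forall>a\<in>S. \<forall>b\<in>S. a \<noteq> k \<longrightarrow> b \<noteq> k \<longrightarrow> a \<noteq> b \<longrightarrow> fam E {a,b,k}) \<longleftrightarrow>
        (\<forall>a\<in>S. \<forall>b\<in>S. a \<noteq> k \<longrightarrow> b \<noteq> k \<longrightarrow> a \<noteq> b \<longrightarrow> fam E' {a,b,k})" for k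
      using f3 by auto
    ultimately show ?thesis unfolding fam_char[OF assms(1), of S] fam_char[OF assms(2), of S] by simp
  qed
  thus ?thesis by (simp add: vec_eq_iff ci_nth)
qed



locale cim_setup =
  fixes G :: "('n::finite \<times> 'n) set" and i :: 'n and Ss :: "'n set" and H :: "('n \<times> 'n) set"
  assumes iS: "i \<notin> Ss" and dG: "acyclic G" and edgeless: "\<forall>a\<in>Ss. \<forall>b\<in>Ss. (a, b) \<notin> G"
    and Hdef: "H = (G - {(i, j) | j. j \<in> Ss}) \<union> {(j, i) | j. j \<in> Ss}" and dH: "acyclic H"
begin

lemma H_iff: "(u,v) \<in> H \<longleftrightarrow> ((u,v) \<in> G \<and> \<not>(u = i \<and> v \<in> Ss)) \<or> (v = i \<and> u \<in> Ss)"
  using Hdef by auto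

definition "P = pa G i"
definition "X = Ss - P"
definition "C = {x\<in>X. (i,x) \<notin> G}"
definition "Px x = {p\<in>P. \<not> adj G x p}"
definition "U b = pa G b - P - {i}"
definition "W x y = {i,x,y} \<union> Px x \<union> Px y"
definition "Sb b = {i,b} \<union> U b"
definition "Vb b = {i,b} \<union> Px b"
definition "Com = {S. char_imset G $ S = char_imset H $ S}"
definition "agree E \<longleftrightarrow> acyclic E \<and> (\<forall>S\<in>Com. char_imset E $ S = char_imset G $ S)"
definition "h E x \<longleftrightarrow> (x,i) \<in> E \<and> (\<forall>p\<in>Px x. (p,i) \<in> E)"

lemma P_iff: "p \<in> P \<longleftrightarrow> (p,i) \<in> G"
  by (simp add: P_def pa_def)

lemma i_notin_P: "i \<notin> P"
  using acyc_irrefl[OF dG] by (simp add: P_iff)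

lemma X_iff: "x \<in> X \<longleftrightarrow> x \<in> Ss \<and> (x,i) \<notin> G"
  by (simp add: X_def P_iff)

lemma X_ne_i: "x \<in> X \<Longrightarrow> x \<noteq> i"
  using iS by (auto simp: X_iff)

lemma C_sub: "C \<subseteq> X" by (auto simp: C_def)

lemma C_nadj: "x \<in> C \<Longrightarrow> \<not> adj G i x"
  by (auto simp: C_def X_iff adj_def)

lemma B_edge: "x \<in> X \<Longrightarrow> x \<notin> C \<Longrightarrow> (i,x) \<in> G"
  by (auto simp: C_def)

lemma Ss_nadj: "x \<in> Ss \<Longrightarrow> y \<in> Ss \<Longrightarrow> \<not> adj G x y"
  using edgeless by (auto simp: adj_def)

lemma P_ne_i: "p \<in> P \<Longrightarrow> p \<noteq> i"
  using i_notin_P by auto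

lemma X_notin_P: "x \<in> X \<Longrightarrow> x \<notin> P"
  by (auto simp: X_def)

lemma adj_H_noti: "u \<noteq> i \<Longrightarrow> v \<noteq> i \<Longrightarrow> adj H u v \<longleftrightarrow> adj G u v"
  by (auto simp: adj_def H_iff)

lemma adj_H_i: "z \<noteq> i \<Longrightarrow> adj H i z \<longleftrightarrow> adj G i z \<or> z \<in> Ss"
  by (auto simp: adj_def H_iff)

lemma agree_adj:
  assumes "agree E" "u \<noteq> v" "adj G u v \<longleftrightarrow> adj H u v"
  shows "adj E u v \<longleftrightarrow> adj G u v"
proof -
  have cG: "char_imset G $ {u,v} = (if adj G u v then 1 else 0)"
    using ci_eq[of u "{u,v}" v G] assms(2) fam_pair[OF assms(2)] by simp
  have cH: "char_imset H $ {u,v} = (if adj H u v then 1 else 0)"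
    using ci_eq[of u "{u,v}" v H] assms(2) fam_pair[OF assms(2)] by simp
  have cE: "char_imset E $ {u,v} = (if adj E u v then 1 else 0)"
    using ci_eq[of u "{u,v}" v E] assms(2) fam_pair[OF assms(2)] by simp
  have "{u,v} \<in> Com" using cG cH assms(3) by (simp add: Com_def)
  hence "char_imset E $ {u,v} = char_imset G $ {u,v}" using assms(1) by (simp add: agree_def)
  thus ?thesis using cG cE by (simp split: if_splits)
qed

lemma agree_G: "agree G" using dG by (simp add: agree_def)
lemma agree_H: "agree H" using dH by (simp add: agree_def Com_def)
lemma agree_acyc: "agree E \<Longrightarrow> acyclic E" by (simp add: agree_def)

lemma F1: "agree E \<Longrightarrow> x \<in> Ss \<Longrightarrow> y \<in> Ss \<Longrightarrow> x \<noteq> y \<Longrightarrow> \<not> adj E x y"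
proof -
  assume a: "agree E" "x \<in> Ss" "y \<in> Ss" "x \<noteq> y"
  have "x \<noteq> i" "y \<noteq> i" using a iS by auto
  thus ?thesis using agree_adj[OF a(1) a(4)] adj_H_noti Ss_nadj[OF a(2,3)] by simp
qed

lemma F2: "agree E \<Longrightarrow> x \<in> X \<Longrightarrow> p \<in> Px x \<Longrightarrow> \<not> adj E x p"
proof -
  assume a: "agree E" "x \<in> X" "p \<in> Px x"
  have pP: "p \<in> P" "\<not> adj G x p" using a(3) by (auto simp: Px_def)
  have "x \<noteq> i" "p \<noteq> i" "x \<noteq> p" using a(2) pP X_ne_i P_ne_i X_notin_P by auto
  thus ?thesis using agree_adj[OF a(1) \<open>x \<noteq> p\<close>] adj_H_noti pP(2) by simp
qed

lemma U_props: "r \<in> U b \<Longrightarrow> (r,b) \<in> G \<and> r \<notin> P \<and> r \<noteq> i"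
  by (auto simp: U_def pa_def)

lemma F3: "agree E \<Longrightarrow> b \<in> X \<Longrightarrow> b \<notin> C \<Longrightarrow> r \<in> U b \<Longrightarrow> \<not> adj E i r"
proof -
  assume a: "agree E" "b \<in> X" "b \<notin> C" "r \<in> U b"
  have r: "(r,b) \<in> G" "r \<notin> P" "r \<noteq> i" using U_props[OF a(4)] by auto
  have bS: "b \<in> Ss" using a(2) by (simp add: X_iff)
  have rS: "r \<notin> Ss" using edgeless r(1) bS by blast
  have ib: "(i,b) \<in> G" using B_edge a(2,3) by blast
  have nG: "\<not> adj G i r"
  proof
    assume "adj G i r"
    hence "(i,r) \<in> G" using r(2) by (auto simp: adj_def P_iff)
    hence h1: "(i,r) \<in> H" using rS by (simp add: H_iff)
    have h2: "(r,b) \<in> H" using r(1) r(3) by (simp add: H_iff)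
    have h3: "(b,i) \<in> H" using bS by (simp add: H_iff)
    have "(i,i) \<in> H\<^sup>+" using h1 h2 h3 by (meson r_into_trancl trancl_into_trancl)
    thus False using dH unfolding acyclic_def by blast
  qed
  have "adj G i r \<longleftrightarrow> adj H i r" using adj_H_i[OF r(3)] rS by simp
  thus ?thesis using agree_adj[OF a(1) r(3)[symmetric]] nG by simp
qed

lemma F4: "agree E \<Longrightarrow> p \<in> P \<Longrightarrow> adj E i p"
proof -
  assume a: "agree E" "p \<in> P"
  have "p \<noteq> i" using a(2) P_ne_i by simp
  moreover have "adj G i p" using a(2) by (simp add: adj_def P_iff)
  ultimately show ?thesis using agree_adj[OF a(1), of i p] adj_H_i[of p] by auto
qed

lemma F5: "agree E \<Longrightarrow> c \<in> C \<Longrightarrow> p \<in> P \<Longrightarrow> adj G c p \<Longrightarrow> adj E c p"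
proof -
  assume a: "agree E" "c \<in> C" "p \<in> P" "adj G c p"
  have cX: "c \<in> X" using a(2) C_sub by blast
  have "c \<noteq> i" "p \<noteq> i" "c \<noteq> p" using cX a(3) X_ne_i P_ne_i X_notin_P by auto
  thus ?thesis using agree_adj[OF a(1) \<open>c \<noteq> p\<close>] adj_H_noti a(4) by simp
qed

lemma F6: "agree E \<Longrightarrow> b \<in> X \<Longrightarrow> b \<notin> C \<Longrightarrow> adj E i b"
proof -
  assume a: "agree E" "b \<in> X" "b \<notin> C"
  have "b \<noteq> i" using a(2) X_ne_i by simp
  moreover have "adj G i b" using B_edge[OF a(2,3)] by (simp add: adj_def)
  ultimately show ?thesis using agree_adj[OF a(1), of i b] adj_H_i[of b] by auto
qed

end


lemma nadj_D: "\<not> adj E a b \<Longrightarrow> (a,b) \<notin> E \<and> (b,a) \<notin> E"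
  by (simp add: adj_def)

context cim_setup begin

lemma X_Ss: "x \<in> X \<Longrightarrow> x \<in> Ss" by (simp add: X_iff)

lemma Px_P: "p \<in> Px x \<Longrightarrow> p \<in> P" by (simp add: Px_def)

lemma Px_ne: "x \<in> X \<Longrightarrow> p \<in> Px x \<Longrightarrow> p \<noteq> x \<and> p \<noteq> i"
  using Px_P X_notin_P P_ne_i by blast

lemma K1:
  assumes E: "agree E" and xy: "x \<in> X" "y \<in> X" "x \<noteq> y"
  shows "char_imset E $ (W x y) = (if h E x \<and> h E y then 1 else 0)"
proof -
  have nxy: "(x,y) \<notin> E" "(y,x) \<notin> E" using nadj_D[OF F1[OF E X_Ss[OF xy(1)] X_Ss[OF xy(2)] xy(3)]] by auto
  have des: "\<exists>z\<in>W x y. z \<noteq> k \<and> (z,k) \<notin> E" if k: "k \<in> W x y" "k \<noteq> i" for k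
  proof -
    have "k = x \<or> k = y \<or> k \<in> Px x \<or> k \<in> Px y" using k by (auto simp: W_def)
    thus ?thesis
    proof (elim disjE)
      assume "k = x" thus ?thesis using nxy xy(3) by (intro bexI[of _ y]) (auto simp: W_def)
    next
      assume "k = y" thus ?thesis using nxy xy(3) by (intro bexI[of _ x]) (auto simp: W_def)
    next
      assume kp: "k \<in> Px x"
      have "(x,k) \<notin> E" using nadj_D[OF F2[OF E xy(1) kp]] by simp
      thus ?thesis using Px_ne[OF xy(1) kp] by (intro bexI[of _ x]) (auto simp: W_def)
    next
      assume kp: "k \<in> Px y"
      have "(y,k) \<notin> E" using nadj_D[OF F2[OF E xy(2) kp]] by simp
      thus ?thesis using Px_ne[OF xy(2) kp] by (intro bexI[of _ y]) (auto simp: W_def)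
    qed
  qed
  have iW: "i \<in> W x y" "x \<in> W x y" by (auto simp: W_def)
  have fe: "fam E (W x y) \<longleftrightarrow> (\<forall>z\<in>W x y. z \<noteq> i \<longrightarrow> (z,i) \<in> E)"
    by (rule fam_designated[OF iW(1) des]) auto
  have "(\<forall>z\<in>W x y. z \<noteq> i \<longrightarrow> (z,i) \<in> E) \<longleftrightarrow> h E x \<and> h E y"
    using i_notin_P X_ne_i[OF xy(1)] X_ne_i[OF xy(2)] by (auto simp: W_def h_def Px_def)
  thus ?thesis using ci_eq[OF iW X_ne_i[OF xy(1), symmetric]] fe by simp
qed

lemma K2:
  assumes E: "agree E" and xy: "x \<in> Ss" "y \<in> Ss" "x \<noteq> y"
  shows "char_imset E $ {i,x,y} = (if (x,i) \<in> E \<and> (y,i) \<in> E then 1 else 0)"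
proof -
  have nxy: "(x,y) \<notin> E" "(y,x) \<notin> E" using nadj_D[OF F1[OF E xy]] by auto
  have xi: "x \<noteq> i" "y \<noteq> i" using xy iS by auto
  have des: "\<exists>z\<in>{i,x,y}. z \<noteq> k \<and> (z,k) \<notin> E" if k: "k \<in> {i,x,y}" "k \<noteq> i" for k
    using k nxy xy(3) by auto
  have fe: "fam E {i,x,y} \<longleftrightarrow> (\<forall>z\<in>{i,x,y}. z \<noteq> i \<longrightarrow> (z,i) \<in> E)"
    by (rule fam_designated) (use des in auto)
  show ?thesis using ci_eq[of i "{i,x,y}" x E] xi fe by auto
qed

lemma K3:
  assumes E: "agree E" and x: "x \<in> X" and p: "p \<in> Px x"
  shows "char_imset E $ {i,x,p} = (if (x,i) \<in> E \<and> (p,i) \<in> E then 1 else 0)"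
proof -
  have nxp: "(x,p) \<notin> E" "(p,x) \<notin> E" using nadj_D[OF F2[OF E x p]] by auto
  have ne: "p \<noteq> x" "p \<noteq> i" using Px_ne[OF x p] by auto
  have xi: "x \<noteq> i" using X_ne_i[OF x] .
  have des: "\<exists>z\<in>{i,x,p}. z \<noteq> k \<and> (z,k) \<notin> E" if k: "k \<in> {i,x,p}" "k \<noteq> i" for k
    using k nxp ne by auto
  have fe: "fam E {i,x,p} \<longleftrightarrow> (\<forall>z\<in>{i,x,p}. z \<noteq> i \<longrightarrow> (z,i) \<in> E)"
    by (rule fam_designated) (use des in auto)
  show ?thesis using ci_eq[of i "{i,x,p}" x E] xi ne fe by auto
qed

lemma U_ne_b: "r \<in> U b \<Longrightarrow> r \<noteq> b"
  using U_props acyc_irrefl[OF dG] by blast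

lemma K4:
  assumes E: "agree E" and b: "b \<in> X" "b \<notin> C" and U: "U b \<noteq> {}"
  shows "char_imset E $ (Sb b) = (if (i,b) \<in> E \<and> (\<forall>r\<in>U b. (r,b) \<in> E) then 1 else 0)"
proof -
  have bi: "b \<noteq> i" using X_ne_i[OF b(1)] .
  obtain r0 where r0: "r0 \<in> U b" using U by blast
  have nir: "(i,r) \<notin> E \<and> (r,i) \<notin> E" if "r \<in> U b" for r using nadj_D[OF F3[OF E b that]] by simp
  have des: "\<exists>z\<in>Sb b. z \<noteq> k \<and> (z,k) \<notin> E" if k: "k \<in> Sb b" "k \<noteq> b" for k
  proof -
    have "k = i \<or> k \<in> U b" using k by (auto simp: Sb_def)
    thus ?thesis
    proof
      assume "k = i" thus ?thesis using nir[OF r0] r0 U_props[OF r0] by (intro bexI[of _ r0]) (auto simp: Sb_def)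
    next
      assume kU: "k \<in> U b" thus ?thesis using nir[OF kU] U_props[OF kU] by (intro bexI[of _ i]) (auto simp: Sb_def)
    qed
  qed
  have bS: "b \<in> Sb b" "i \<in> Sb b" by (auto simp: Sb_def)
  have fe: "fam E (Sb b) \<longleftrightarrow> (\<forall>z\<in>Sb b. z \<noteq> b \<longrightarrow> (z,b) \<in> E)"
    by (rule fam_designated[OF bS(1) des]) auto
  have "(\<forall>z\<in>Sb b. z \<noteq> b \<longrightarrow> (z,b) \<in> E) \<longleftrightarrow> (i,b) \<in> E \<and> (\<forall>r\<in>U b. (r,b) \<in> E)"
    using bi U_ne_b by (auto simp: Sb_def)
  thus ?thesis using ci_eq[OF bS(2) bS(1) bi[symmetric]] fe by simp
qed

lemma K5:
  assumes E: "agree E" and b: "b \<in> X" "b \<notin> C" and r: "r \<in> U b"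
  shows "char_imset E $ {i,b,r} = (if (i,b) \<in> E \<and> (r,b) \<in> E then 1 else 0)"
proof -
  have bi: "b \<noteq> i" using X_ne_i[OF b(1)] .
  have nir: "(i,r) \<notin> E" "(r,i) \<notin> E" using nadj_D[OF F3[OF E b r]] by auto
  have rp: "r \<noteq> b" "r \<noteq> i" using U_ne_b[OF r] U_props[OF r] by auto
  have des: "\<exists>z\<in>{i,b,r}. z \<noteq> k \<and> (z,k) \<notin> E" if k: "k \<in> {i,b,r}" "k \<noteq> b" for k
    using k nir rp by auto
  have fe: "fam E {i,b,r} \<longleftrightarrow> (\<forall>z\<in>{i,b,r}. z \<noteq> b \<longrightarrow> (z,b) \<in> E)"
    by (rule fam_designated) (use des in auto)
  show ?thesis using ci_eq[of i "{i,b,r}" b E] bi rp fe by auto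
qed

lemma K6:
  assumes E: "agree E" and b: "b \<in> X" and Pn: "Px b \<noteq> {}"
  shows "char_imset E $ (Vb b) = (if h E b then 1 else 0)"
proof -
  have bi: "b \<noteq> i" using X_ne_i[OF b] .
  obtain p0 where p0: "p0 \<in> Px b" using Pn by blast
  have nbp: "(b,p) \<notin> E \<and> (p,b) \<notin> E" if "p \<in> Px b" for p using nadj_D[OF F2[OF E b that]] by simp
  have des: "\<exists>z\<in>Vb b. z \<noteq> k \<and> (z,k) \<notin> E" if k: "k \<in> Vb b" "k \<noteq> i" for k
  proof -
    have "k = b \<or> k \<in> Px b" using k by (auto simp: Vb_def)
    thus ?thesis
    proof
      assume "k = b" thus ?thesis using nbp[OF p0] p0 Px_ne[OF b p0] by (intro bexI[of _ p0]) (auto simp: Vb_def)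
    next
      assume kU: "k \<in> Px b" thus ?thesis using nbp[OF kU] Px_ne[OF b kU] by (intro bexI[of _ b]) (auto simp: Vb_def)
    qed
  qed
  have iV: "i \<in> Vb b" "b \<in> Vb b" by (auto simp: Vb_def)
  have fe: "fam E (Vb b) \<longleftrightarrow> (\<forall>z\<in>Vb b. z \<noteq> i \<longrightarrow> (z,i) \<in> E)"
    by (rule fam_designated[OF iV(1) des]) auto
  have "(\<forall>z\<in>Vb b. z \<noteq> i \<longrightarrow> (z,i) \<in> E) \<longleftrightarrow> h E b"
    using bi i_notin_P by (auto simp: Vb_def h_def Px_def)
  thus ?thesis using ci_eq[OF iV bi[symmetric]] fe by simp
qed

lemma K7:
  assumes "c \<in> X"
  shows "char_imset E $ {i,c} = (if adj E i c then 1 else 0)"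
proof -
  have "i \<noteq> c" using X_ne_i[OF assms] by simp
  thus ?thesis using ci_eq[of i "{i,c}" c E] fam_pair[of i c E] by simp
qed

lemma K8:
  assumes E: "agree E" and c: "c \<in> C" and p: "p \<in> P" "adj G c p" and ic: "adj E i c"
  shows "char_imset E $ {i,c,p} = 1"
proof -
  have cX: "c \<in> X" using c C_sub by blast
  have ne: "i \<noteq> c" "i \<noteq> p" "c \<noteq> p" using X_ne_i[OF cX] P_ne_i[OF p(1)] X_notin_P[OF cX] p(1) by auto
  have "fam E {i,c,p}" using triangle[OF agree_acyc[OF E] ne ic F4[OF E p(1)] F5[OF E c p]] .
  thus ?thesis using ci_eq[of i "{i,c,p}" c E] ne by simp
qed

lemma hG: "x \<in> X \<Longrightarrow> \<not> h G x"
  by (simp add: h_def X_iff)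

lemma hH: "x \<in> X \<Longrightarrow> h H x"
  using P_ne_i by (auto simp: h_def H_iff X_iff Px_def P_iff)

lemma iB_G: "b \<in> X \<Longrightarrow> b \<notin> C \<Longrightarrow> (i,b) \<in> G" using B_edge .
lemma iB_H: "b \<in> X \<Longrightarrow> (i,b) \<notin> H" using iS by (auto simp: H_iff X_iff)

lemma xi_G: "x \<in> X \<Longrightarrow> (x,i) \<notin> G" by (simp add: X_iff)
lemma xi_H: "x \<in> Ss \<Longrightarrow> (x,i) \<in> H" by (simp add: H_iff)
lemma pi_H: "p \<in> P \<Longrightarrow> (p,i) \<in> H" using P_ne_i by (simp add: H_iff P_iff)

lemma D4_G:
  assumes c: "c \<in> C" and p: "p \<in> P"
  shows "char_imset G $ {i,c,p} = 0"
proof -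
  have cX: "c \<in> X" using c C_sub by blast
  have ne: "i \<noteq> c" "i \<noteq> p" "c \<noteq> p" using X_ne_i[OF cX] P_ne_i[OF p] X_notin_P[OF cX] p by auto
  have e1: "(c,i) \<notin> G" "(i,c) \<notin> G" using C_nadj[OF c] by (auto simp: adj_def)
  have e2: "(i,p) \<notin> G" using acyc_asym[OF dG] p by (auto simp: P_iff)
  have "\<not> fam G {i,c,p}"
  proof
    assume "fam G {i,c,p}"
    then obtain k where k: "k \<in> {i,c,p}" "\<forall>z\<in>{i,c,p}. z \<noteq> k \<longrightarrow> (z,k) \<in> G" unfolding fam_iff by blast
    have "k = i \<or> k = c \<or> k = p" using k(1) by simp
    thus False
    proof (elim disjE)
      assume "k = i" thus False using k(2) ne e1 by auto
    next
      assume "k = c" thus False using k(2) ne e1 by auto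
    next
      assume "k = p" thus False using k(2) ne e2 by auto
    qed
  qed
  thus ?thesis using ci_eq[of i "{i,c,p}" c G] ne by simp
qed

lemma D4_H:
  assumes c: "c \<in> C" and p: "p \<in> P" "adj G c p"
  shows "char_imset H $ {i,c,p} = 1"
proof -
  have cX: "c \<in> X" using c C_sub by blast
  have "adj H i c" using adj_H_i[of c] X_ne_i[OF cX] X_Ss[OF cX] by simp
  thus ?thesis using K8[OF agree_H c p] by simp
qed

end


lemma card2_with:
  assumes "card S = 2" "i \<in> S"
  shows "\<exists>u. S = {i,u} \<and> u \<noteq> i"
proof -
  obtain x y where xy: "S = {x,y}" "x \<noteq> y" using assms(1) card_2_iff by metis
  show ?thesis
  proof (cases "i = x")
    case True thus ?thesis using xy by auto
  next
    case False hence "i = y" using assms(2) xy by auto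
    thus ?thesis using xy by auto
  qed
qed

lemma card3_with:
  assumes "card S = 3" "i \<in> S"
  shows "\<exists>u w. S = {i,u,w} \<and> u \<noteq> i \<and> w \<noteq> i \<and> u \<noteq> w"
proof -
  obtain x y z where xyz: "S = {x,y,z}" "x \<noteq> y" "y \<noteq> z" "x \<noteq> z" using assms(1) card_3_iff by metis
  have "i = x \<or> i = y \<or> i = z" using assms(2) xyz(1) by auto
  thus ?thesis
  proof (elim disjE)
    assume "i = x" thus ?thesis using xyz by (intro exI[of _ y] exI[of _ z]) auto
  next
    assume "i = y" thus ?thesis using xyz by (intro exI[of _ x] exI[of _ z]) auto
  next
    assume "i = z" thus ?thesis using xyz by (intro exI[of _ x] exI[of _ y]) auto
  qed
qed

context cim_setup begin

lemma notCom_fam: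
  assumes "S \<notin> Com" "2 \<le> card S"
  shows "fam G S \<noteq> fam H S"
  using assms by (auto simp: Com_def ci_nth split: if_splits)

lemma fam_H_not_G_witness:
  assumes "fam H S" "\<not> fam G S"
  shows "i \<in> S \<and> (\<forall>z\<in>S. z \<noteq> i \<longrightarrow> (z,i) \<in> G \<or> z \<in> Ss)"
proof -
  obtain k where k: "k \<in> S" "\<forall>z\<in>S. z \<noteq> k \<longrightarrow> (z,k) \<in> H" using assms(1) unfolding fam_iff by blast
  have "k = i"
  proof (rule ccontr)
    assume ki: "k \<noteq> i"
    have "\<forall>z\<in>S. z \<noteq> k \<longrightarrow> (z,k) \<in> G"
    proof (intro ballI impI)
      fix z assume "z \<in> S" "z \<noteq> k"
      hence "(z,k) \<in> H" using k(2) by simp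
      thus "(z,k) \<in> G" using ki by (simp add: H_iff)
    qed
    hence "fam G S" using k(1) by (rule fam_witness[rotated])
    thus False using assms(2) by simp
  qed
  have "\<forall>z\<in>S. z \<noteq> i \<longrightarrow> (z,i) \<in> G \<or> z \<in> Ss"
  proof (intro ballI impI)
    fix z assume "z \<in> S" "z \<noteq> i"
    hence "(z,i) \<in> H" using k(2) \<open>k = i\<close> by simp
    thus "(z,i) \<in> G \<or> z \<in> Ss" by (auto simp: H_iff)
  qed
  thus ?thesis using k(1) \<open>k = i\<close> by simp
qed

lemma fam_G_not_H_witness:
  assumes "fam G S" "\<not> fam H S"
  shows "\<exists>k\<in>S. k \<in> X \<and> k \<notin> C \<and> i \<in> S \<and> (\<forall>z\<in>S. z \<noteq> k \<longrightarrow> (z,k) \<in> G)"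
proof -
  obtain k where k: "k \<in> S" "\<forall>z\<in>S. z \<noteq> k \<longrightarrow> (z,k) \<in> G" using assms(1) unfolding fam_iff by blast
  have "\<exists>z\<in>S. z \<noteq> k \<and> (z,k) \<notin> H"
  proof (rule ccontr)
    assume "\<not> (\<exists>z\<in>S. z \<noteq> k \<and> (z,k) \<notin> H)"
    hence "\<forall>z\<in>S. z \<noteq> k \<longrightarrow> (z,k) \<in> H" by blast
    hence "fam H S" using k(1) by (rule fam_witness[rotated])
    thus False using assms(2) by simp
  qed
  then obtain z where z: "z \<in> S" "z \<noteq> k" "(z,k) \<notin> H" by blast
  have zk: "(z,k) \<in> G" using k(2) z by simp
  have "z = i \<and> k \<in> Ss" using z(3) zk by (auto simp: H_iff)
  hence iS': "i \<in> S" "k \<in> Ss" "(i,k) \<in> G" using z(1) zk by auto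
  have "(k,i) \<notin> G" using acyc_asym[OF dG iS'(3)] .
  hence kX: "k \<in> X" using iS'(2) by (simp add: X_iff)
  have "k \<notin> C" using iS'(3) by (simp add: C_def)
  thus ?thesis using k kX iS' by blast
qed

definition "Dform S \<longleftrightarrow> (\<exists>c\<in>C. S = {i,c}) \<or> (\<exists>x\<in>X. \<exists>y\<in>X. x \<noteq> y \<and> S = {i,x,y}) \<or>
         (\<exists>x\<in>X. \<exists>p\<in>Px x. S = {i,x,p}) \<or> (\<exists>c\<in>C. \<exists>p\<in>P. adj G c p \<and> S = {i,c,p}) \<or>
         (\<exists>b\<in>X. b \<notin> C \<and> (\<exists>r\<in>U b. S = {i,b,r}))"

lemma D1I: assumes "c \<in> C" "S = {i,c}" shows "Dform S"
  unfolding Dform_def by (rule disjI1, rule bexI[of _ c]) (use assms in auto)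
lemma D2I: assumes "x \<in> X" "y \<in> X" "x \<noteq> y" "S = {i,x,y}" shows "Dform S"
  unfolding Dform_def by (rule disjI2, rule disjI1, rule bexI[of _ x], rule bexI[of _ y]) (use assms in auto)
lemma D3I: assumes "x \<in> X" "p \<in> Px x" "S = {i,x,p}" shows "Dform S"
  unfolding Dform_def by (rule disjI2, rule disjI2, rule disjI1, rule bexI[of _ x], rule bexI[of _ p]) (use assms in auto)
lemma D4I: assumes "c \<in> C" "p \<in> P" "adj G c p" "S = {i,c,p}" shows "Dform S"
  unfolding Dform_def by (rule disjI2, rule disjI2, rule disjI2, rule disjI1, rule bexI[of _ c], rule bexI[of _ p]) (use assms in auto)
lemma D5I: assumes "b \<in> X" "b \<notin> C" "r \<in> U b" "S = {i,b,r}" shows "Dform S"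
  unfolding Dform_def by (rule disjI2, rule disjI2, rule disjI2, rule disjI2, rule bexI[of _ b]) (use assms in auto)

lemma classify:
  assumes card: "card S = 2 \<or> card S = 3" and nC: "S \<notin> Com"
  shows "Dform S"
proof -
  have c2: "2 \<le> card S" using card by auto
  have ne: "fam G S \<noteq> fam H S" using notCom_fam[OF nC c2] .
  show ?thesis
  proof (cases "fam H S")
    case True
    hence nG: "\<not> fam G S" using ne by simp
    note wi0 = fam_H_not_G_witness[OF True nG]
    have wi: "i \<in> S" "\<forall>z\<in>S. z \<noteq> i \<longrightarrow> (z,i) \<in> G \<or> z \<in> Ss" using wi0 by simp_all
    have famGi: "fam G S" if "\<forall>z\<in>S. z \<noteq> i \<longrightarrow> (z,i) \<in> G"
      using that wi(1) by (rule fam_witness[rotated])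
    from card show ?thesis
    proof
      assume "card S = 2"
      hence "\<exists>u. S = {i,u} \<and> u \<noteq> i" by (rule card2_with[OF _ wi(1)])
      then obtain u where "S = {i,u} \<and> u \<noteq> i" ..
      hence u: "S = {i,u}" "u \<noteq> i" by simp_all
      have "(u,i) \<notin> G"
      proof
        assume "(u,i) \<in> G"
        hence "\<forall>z\<in>S. z \<noteq> i \<longrightarrow> (z,i) \<in> G" using u by auto
        hence "fam G S" by (rule famGi)
        thus False using nG by simp
      qed
      hence uS: "u \<in> Ss" using wi(2) u by auto
      hence uX: "u \<in> X" using \<open>(u,i) \<notin> G\<close> by (simp add: X_iff)
      have "(i,u) \<notin> G"
      proof
        assume "(i,u) \<in> G"
        hence "fam G S" using u by (intro fam_witness[of u]) auto
        thus False using nG by simp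
      qed
      hence "u \<in> C" using uX by (simp add: C_def)
      thus ?thesis by (rule D1I[OF _ u(1)])
    next
      assume "card S = 3"
      hence "\<exists>u w. S = {i,u,w} \<and> u \<noteq> i \<and> w \<noteq> i \<and> u \<noteq> w" by (rule card3_with[OF _ wi(1)])
      then obtain u w where "S = {i,u,w} \<and> u \<noteq> i \<and> w \<noteq> i \<and> u \<noteq> w" by (elim exE) (rule that)
      hence uw: "S = {i,u,w}" "u \<noteq> i" "w \<noteq> i" "u \<noteq> w" by simp_all
      have main: "?thesis" if a: "S = {i,a,b}" "a \<noteq> i" "b \<noteq> i" "a \<noteq> b" "(a,i) \<notin> G" for a b
      proof -
        have aS: "a \<in> Ss" using wi(2) a by auto
        have aX: "a \<in> X" using aS a(5) by (simp add: X_iff)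
        show ?thesis
        proof (cases "(b,i) \<in> G")
          case False
          hence "b \<in> Ss" using wi(2) a by auto
          hence "b \<in> X" using False by (simp add: X_iff)
          thus ?thesis using aX a by (intro D2I[of a b]) auto
        next
          case True
          hence bP: "b \<in> P" by (simp add: P_iff)
          show ?thesis
          proof (cases "adj G a b")
            case False
            hence "b \<in> Px a" using bP by (simp add: Px_def)
            thus ?thesis using aX a(1) by (intro D3I[of a b])
          next
            case adjab: True
            show ?thesis
            proof (cases "a \<in> C")
              case True thus ?thesis using bP adjab a(1) by (intro D4I[of a b])
            next
              case False
              have ia: "(i,a) \<in> G" using B_edge[OF aX False] .
              have "(a,b) \<notin> G"
              proof
                assume ab: "(a,b) \<in> G"
                have "(i,i) \<in> G\<^sup>+" using ia ab True by (meson r_into_trancl trancl_into_trancl)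
                thus False using dG unfolding acyclic_def by blast
              qed
              hence "(b,a) \<in> G" using adjab by (simp add: adj_def)
              hence "fam G S" using ia a by (intro fam_witness[of a]) auto
              thus ?thesis using nG by simp
            qed
          qed
        qed
      qed
      show ?thesis
      proof (cases "(u,i) \<in> G")
        case False thus ?thesis using main[of u w] uw by simp
      next
        case True
        have "(w,i) \<notin> G"
        proof
          assume "(w,i) \<in> G"
          hence "\<forall>z\<in>S. z \<noteq> i \<longrightarrow> (z,i) \<in> G" using uw True by auto
          hence "fam G S" by (rule famGi)
          thus False using nG by simp
        qed
        moreover have "S = {i,w,u}" using uw by auto
        ultimately show ?thesis using main[of w u] uw by simp
      qed
    qed
  next
    case False
    hence fG: "fam G S" using ne by simp
    obtain k where k: "k \<in> S" "k \<in> X" "k \<notin> C" "i \<in> S" "\<forall>z\<in>S. z \<noteq> k \<longrightarrow> (z,k) \<in> G"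
      using fam_G_not_H_witness[OF fG False] by (elim bexE conjE) (rule that)
    have ki: "k \<noteq> i" using X_ne_i[OF k(2)] .
    have kiH: "(k,i) \<in> H" using X_Ss[OF k(2)] by (simp add: H_iff)
    from card show ?thesis
    proof
      assume "card S = 2"
      hence "\<exists>u. S = {i,u} \<and> u \<noteq> i" by (rule card2_with[OF _ k(4)])
      then obtain u where "S = {i,u} \<and> u \<noteq> i" ..
      hence u: "S = {i,u}" "u \<noteq> i" by simp_all
      have "u = k" using u k(1) ki by auto
      hence "fam H S" using u kiH by (intro fam_witness[of i]) auto
      thus ?thesis using False by simp
    next
      assume "card S = 3"
      hence "\<exists>u w. S = {i,u,w} \<and> u \<noteq> i \<and> w \<noteq> i \<and> u \<noteq> w" by (rule card3_with[OF _ k(4)])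
      then obtain u w where "S = {i,u,w} \<and> u \<noteq> i \<and> w \<noteq> i \<and> u \<noteq> w" by (elim exE) (rule that)
      hence uw: "S = {i,u,w}" "u \<noteq> i" "w \<noteq> i" "u \<noteq> w" by simp_all
      obtain r where r: "S = {i,k,r}" "r \<noteq> i" "r \<noteq> k"
      proof (cases "u = k")
        case True thus ?thesis using that[of w] uw by auto
      next
        case False hence "w = k" using k(1) uw ki by auto
        thus ?thesis using that[of u] uw by auto
      qed
      have rk: "(r,k) \<in> G" using k(5) r by auto
      have "r \<notin> P"
      proof
        assume "r \<in> P"
        hence "(r,i) \<in> H" using pi_H by simp
        hence "fam H S" using r kiH by (intro fam_witness[of i]) auto
        thus False using False by simp
      qed
      hence "r \<in> U k" using rk r by (simp add: U_def pa_def)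
      thus ?thesis using k(2,3) r(1) by (intro D5I[of k r])
    qed
  qed
qed

end


abbreviation ci :: "('n::finite \<times> 'n) set \<Rightarrow> 'n set \<Rightarrow> real" where
  "ci E S \<equiv> char_imset E $ S"

lemma ci01: "ci E S = 0 \<or> ci E S = 1"
  by (simp add: ci_nth)

lemma sum_le_eq:
  fixes f g :: "'a \<Rightarrow> real"
  assumes "finite A" "\<And>a. a \<in> A \<Longrightarrow> f a \<le> g a" "sum f A = sum g A"
  shows "\<forall>a\<in>A. f a = g a"
proof -
  have "sum (\<lambda>a. g a - f a) A = 0" using assms(3) by (simp add: sum_subtractf)
  hence "\<forall>a\<in>A. g a - f a = 0" using sum_nonneg_eq_0_iff[OF assms(1), of "\<lambda>a. g a - f a"] assms(2) by simp
  thus ?thesis by simp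
qed

context cim_setup begin

definition "m = card X"
definition "lv x v = (if x \<in> C then v$({i,x}) else if U x \<noteq> {} then - v$(Sb x) else v$(Vb x))"
definition "dl x = (if x \<notin> C \<and> U x \<noteq> {} then 1 else (0::real))"
definition "ell x v = lv x v + dl x"
definition "ov x v = (if x \<in> C then (\<Sum>p\<in>P. if adj G x p then v$({i,x}) - v$({i,x,p}) else v$({i,x,p}) - v$({i,x}))
   else if U x \<noteq> {} then (\<Sum>r\<in>U x. v$(Sb x) - v$({i,x,r})) + (\<Sum>p\<in>Px x. v$({i,x,p}) + v$(Sb x))
   else (\<Sum>p\<in>Px x. v$(Vb x) - v$({i,x,p})))"
definition "oc x = (if x \<notin> C \<and> U x \<noteq> {} then real (card (Px x)) else 0)"
definition "NC \<longleftrightarrow> (\<forall>b\<in>X. b \<notin> C \<longrightarrow> U b \<noteq> {} \<or> Px b \<noteq> {})"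

definition "own x E \<longleftrightarrow> (x \<in> C \<longrightarrow> ci E {i,x} = ell x (char_imset E)) \<and>
   (\<forall>p\<in>P. x \<in> C \<or> p \<in> Px x \<longrightarrow> ci E {i,x,p} = ell x (char_imset E)) \<and>
   (x \<notin> C \<longrightarrow> (\<forall>r\<in>U x. ci E {i,x,r} = 1 - ell x (char_imset E)))"

definition "xprops x E \<longleftrightarrow> (ell x (char_imset E) = 0 \<or> ell x (char_imset E) = 1) \<and>
   (h E x \<longrightarrow> ell x (char_imset E) = 1) \<and> ov x (char_imset E) \<le> oc x \<and>
   (ov x (char_imset E) = oc x \<longrightarrow> own x E)"

lemma caseC:
  assumes E: "agree E" and x: "x \<in> X" "x \<in> C"
  shows "xprops x E"
proof -
  let ?v = "char_imset E"
  define a where "a = ci E {i,x}"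
  have a: "a = (if adj E i x then 1 else 0)" using K7[OF x(1)] by (simp add: a_def)
  have ell: "ell x ?v = a" by (simp add: ell_def lv_def dl_def x(2) a_def)
  have oc: "oc x = 0" by (simp add: oc_def x(2))
  define t where "t p = (if adj G x p then a - ci E {i,x,p} else ci E {i,x,p} - a)" for p
  have ov: "ov x ?v = (\<Sum>p\<in>P. t p)" unfolding ov_def t_def a_def using x(2) by simp
  have tle: "t p \<le> 0" if p: "p \<in> P" for p
  proof (cases "adj G x p")
    case True
    have "a \<le> ci E {i,x,p}"
    proof (cases "adj E i x")
      case True2: True
      have "ci E {i,x,p} = 1" using K8[OF E x(2) p True True2] .
      thus ?thesis using a by simp
    next
      case False
      thus ?thesis using a ci01[of E "{i,x,p}"] by auto
    qed
    thus ?thesis using True by (simp add: t_def)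
  next
    case False
    hence pP: "p \<in> Px x" using p by (simp add: Px_def)
    have "ci E {i,x,p} \<le> a" using K3[OF E x(1) pP] a by (auto simp: adj_def)
    thus ?thesis using False by (simp add: t_def)
  qed
  have p1: "ell x ?v = 0 \<or> ell x ?v = 1" using ell a by simp
  have p2: "h E x \<longrightarrow> ell x ?v = 1" using ell a by (auto simp: h_def adj_def)
  have p3: "ov x ?v \<le> oc x" using ov oc tle by (simp add: sum_nonpos)
  have p4: "own x E" if eq: "ov x ?v = oc x"
  proof -
    have "\<forall>p\<in>P. t p = 0" using sum_le_eq[of P t "\<lambda>_. 0"] tle eq ov oc by simp
    hence "\<forall>p\<in>P. ci E {i,x,p} = a" by (auto simp: t_def split: if_splits)
    thus ?thesis using ell x(2) by (simp add: own_def a_def)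
  qed
  show ?thesis using p1 p2 p3 p4 by (simp add: xprops_def)
qed

lemma caseU:
  assumes E: "agree E" and x: "x \<in> X" "x \<notin> C" and U: "U x \<noteq> {}"
  shows "xprops x E"
proof -
  let ?v = "char_imset E"
  define s where "s = ci E (Sb x)"
  have s: "s = (if (i,x) \<in> E \<and> (\<forall>r\<in>U x. (r,x) \<in> E) then 1 else 0)" using K4[OF E x U] by (simp add: s_def)
  have ell: "ell x ?v = 1 - s" by (simp add: ell_def lv_def dl_def x(2) U s_def)
  have oc: "oc x = real (card (Px x))" by (simp add: oc_def x(2) U)
  define f where "f r = s - ci E {i,x,r}" for r
  define g where "g p = ci E {i,x,p} + s" for p
  have ov: "ov x ?v = (\<Sum>r\<in>U x. f r) + (\<Sum>p\<in>Px x. g p)" by (simp add: ov_def x(2) U f_def g_def s_def)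
  have fle: "f r \<le> 0" if r: "r \<in> U x" for r
    using K5[OF E x r] s r by (auto simp: f_def)
  have gle: "g p \<le> 1" if p: "p \<in> Px x" for p
  proof -
    have "\<not> ((x,i) \<in> E \<and> (i,x) \<in> E)" using acyc_asym[OF agree_acyc[OF E]] by blast
    thus ?thesis using K3[OF E x(1) p] s by (auto simp: g_def)
  qed
  have sf: "(\<Sum>r\<in>U x. f r) \<le> 0" using fle by (simp add: sum_nonpos)
  have sg: "(\<Sum>p\<in>Px x. g p) \<le> real (card (Px x))"
    using sum_mono[of "Px x" g "\<lambda>_. 1"] gle by simp
  have p1: "ell x ?v = 0 \<or> ell x ?v = 1" using ell s by simp
  have p2: "h E x \<longrightarrow> ell x ?v = 1"
  proof
    assume "h E x"
    hence "(x,i) \<in> E" by (simp add: h_def)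
    hence "(i,x) \<notin> E" using acyc_asym[OF agree_acyc[OF E]] by blast
    thus "ell x ?v = 1" using ell s by simp
  qed
  have p3: "ov x ?v \<le> oc x" using ov oc sf sg by simp
  have p4: "own x E" if eq: "ov x ?v = oc x"
  proof -
    have e1: "(\<Sum>r\<in>U x. f r) = 0" using eq ov oc sf sg by simp
    have e2: "(\<Sum>p\<in>Px x. g p) = real (card (Px x))" using eq ov oc sf sg by simp
    have "\<forall>r\<in>U x. f r = 0" using sum_le_eq[of "U x" f "\<lambda>_. 0"] fle e1 by simp
    hence r: "\<forall>r\<in>U x. ci E {i,x,r} = 1 - ell x ?v" using ell by (simp add: f_def)
    have "\<forall>p\<in>Px x. g p = 1" using sum_le_eq[of "Px x" g "\<lambda>_. 1"] gle e2 by simp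
    hence p: "\<forall>p\<in>Px x. ci E {i,x,p} = ell x ?v" using ell by (auto simp: g_def algebra_simps)
    show ?thesis using r p x(2) by (simp add: own_def)
  qed
  show ?thesis using p1 p2 p3 p4 by (simp add: xprops_def)
qed

lemma caseV:
  assumes E: "agree E" and x: "x \<in> X" "x \<notin> C" and U: "U x = {}" and nc: "NC"
  shows "xprops x E"
proof -
  let ?v = "char_imset E"
  have Pn: "Px x \<noteq> {}" using nc x U by (auto simp: NC_def)
  define q where "q = ci E (Vb x)"
  have q: "q = (if h E x then 1 else 0)" using K6[OF E x(1) Pn] by (simp add: q_def)
  have ell: "ell x ?v = q" by (simp add: ell_def lv_def dl_def x(2) U q_def)
  have oc: "oc x = 0" by (simp add: oc_def U)
  define f where "f p = q - ci E {i,x,p}" for p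
  have ov: "ov x ?v = (\<Sum>p\<in>Px x. f p)" by (simp add: ov_def x(2) U f_def q_def)
  have fle: "f p \<le> 0" if p: "p \<in> Px x" for p
    using K3[OF E x(1) p] q p by (auto simp: f_def h_def)
  have p1: "ell x ?v = 0 \<or> ell x ?v = 1" using ell q by simp
  have p2: "h E x \<longrightarrow> ell x ?v = 1" using ell q by simp
  have p3: "ov x ?v \<le> oc x" using ov oc fle by (simp add: sum_nonpos)
  have p4: "own x E" if eq: "ov x ?v = oc x"
  proof -
    have "\<forall>p\<in>Px x. f p = 0" using sum_le_eq[of "Px x" f "\<lambda>_. 0"] fle eq ov oc by simp
    hence p: "\<forall>p\<in>Px x. ci E {i,x,p} = ell x ?v" using ell by (simp add: f_def)
    show ?thesis using p x(2) U by (simp add: own_def)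
  qed
  show ?thesis using p1 p2 p3 p4 by (simp add: xprops_def)
qed

lemma xprops_all:
  assumes "agree E" "x \<in> X" "NC"
  shows "xprops x E"
  using caseC[OF assms(1,2)] caseU[OF assms(1,2)] caseV[OF assms(1,2) _ _ assms(3)] by blast

end


lemma count_real:
  fixes A :: "'a set"
  assumes "finite A"
  shows "(\<Sum>y\<in>A. if P y then (1::real) else 0) = real (card {y\<in>A. P y})"
proof -
  have "(\<Sum>y\<in>{y\<in>A. P y}. (1::real)) = (\<Sum>y\<in>A. if P y then 1 else 0)"
    using sum.inter_filter[OF assms, of "\<lambda>_. (1::real)" P] by simp
  thus ?thesis by simp
qed

context cim_setup begin

lemma valsG:
  assumes x: "x \<in> X" and nc: "NC"
  shows "ell x (char_imset G) = 0 \<and> ov x (char_imset G) = oc x"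
proof (cases "x \<in> C")
  case True
  have a: "ci G {i,x} = 0" using K7[OF x, of G] C_nadj[OF True] by simp
  have t: "ci G {i,x,p} = 0" if "p \<in> P" for p
  proof (cases "adj G x p")
    case True thus ?thesis using D4_G[OF \<open>x \<in> C\<close> that] by simp
  next
    case False hence "p \<in> Px x" using that by (simp add: Px_def)
    thus ?thesis using K3[OF agree_G x] xi_G[OF x] by simp
  qed
  have z: "(\<Sum>p\<in>P. if adj G x p then ci G {i,x} - ci G {i,x,p} else ci G {i,x,p} - ci G {i,x}) = 0"
    using a t by (intro sum.neutral) auto
  show ?thesis using a z True by (simp add: ell_def lv_def dl_def ov_def oc_def)
next
  case nC: False
  show ?thesis
  proof (cases "U x = {}")
    case False
    have s: "ci G (Sb x) = 1" using K4[OF agree_G x nC False] iB_G[OF x nC] U_props by auto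
    have r: "ci G {i,x,r} = 1" if "r \<in> U x" for r using K5[OF agree_G x nC that] iB_G[OF x nC] U_props[OF that] by simp
    have p: "ci G {i,x,p} = 0" if "p \<in> Px x" for p using K3[OF agree_G x that] xi_G[OF x] by simp
    show ?thesis using s r p nC False by (simp add: ell_def lv_def dl_def ov_def oc_def)
  next
    case True
    have Pn: "Px x \<noteq> {}" using nc x nC True by (auto simp: NC_def)
    have q: "ci G (Vb x) = 0" using K6[OF agree_G x Pn] hG[OF x] by simp
    have p: "ci G {i,x,p} = 0" if "p \<in> Px x" for p using K3[OF agree_G x that] xi_G[OF x] by simp
    show ?thesis using q p nC True by (simp add: ell_def lv_def dl_def ov_def oc_def)
  qed
qed

lemma valsH:
  assumes x: "x \<in> X" and nc: "NC"
  shows "ell x (char_imset H) = 1 \<and> ov x (char_imset H) = oc x"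
proof (cases "x \<in> C")
  case True
  have adjH: "adj H i x" using adj_H_i[of x] X_ne_i[OF x] X_Ss[OF x] by simp
  have a: "ci H {i,x} = 1" using K7[OF x, of H] adjH by simp
  have t: "ci H {i,x,p} = 1" if "p \<in> P" for p
  proof (cases "adj G x p")
    case True thus ?thesis using D4_H[OF \<open>x \<in> C\<close> that] by simp
  next
    case False hence "p \<in> Px x" using that by (simp add: Px_def)
    thus ?thesis using K3[OF agree_H x] xi_H[OF X_Ss[OF x]] pi_H[OF that] by simp
  qed
  have z: "(\<Sum>p\<in>P. if adj G x p then ci H {i,x} - ci H {i,x,p} else ci H {i,x,p} - ci H {i,x}) = 0"
    using a t by (intro sum.neutral) auto
  show ?thesis using a z True by (simp add: ell_def lv_def dl_def ov_def oc_def)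
next
  case nC: False
  show ?thesis
  proof (cases "U x = {}")
    case False
    have s: "ci H (Sb x) = 0" using K4[OF agree_H x nC False] iB_H[OF x] by auto
    have r: "ci H {i,x,r} = 0" if "r \<in> U x" for r using K5[OF agree_H x nC that] iB_H[OF x] by simp
    have p: "ci H {i,x,p} = 1" if "p \<in> Px x" for p using K3[OF agree_H x that] xi_H[OF X_Ss[OF x]] pi_H[OF Px_P[OF that]] by simp
    show ?thesis using s r p nC False by (simp add: ell_def lv_def dl_def ov_def oc_def)
  next
    case True
    have Pn: "Px x \<noteq> {}" using nc x nC True by (auto simp: NC_def)
    have q: "ci H (Vb x) = 1" using K6[OF agree_H x Pn] hH[OF x] by simp
    have p: "ci H {i,x,p} = 1" if "p \<in> Px x" for p using K3[OF agree_H x that] xi_H[OF X_Ss[OF x]] pi_H[OF Px_P[OF that]] by simp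
    show ?thesis using q p nC True by (simp add: ell_def lv_def dl_def ov_def oc_def)
  qed
qed

definition "cross v = (\<Sum>x\<in>X. \<Sum>y\<in>X-{x}. 2 * v$(W x y) - v$({i,x,y}))"
definition "phi v = cross v - (real m - 1) * (\<Sum>x\<in>X. lv x v) + (\<Sum>x\<in>X. ov x v)"
definition "beta = (real m - 1) * (\<Sum>x\<in>X. dl x) + (\<Sum>x\<in>X. oc x)"

lemma sum_lv: "(\<Sum>x\<in>X. lv x v) = (\<Sum>x\<in>X. ell x v) - (\<Sum>x\<in>X. dl x)"
  by (simp add: ell_def sum.distrib)

lemma phi_alt: "phi v - beta = cross v - (real m - 1) * (\<Sum>x\<in>X. ell x v) + ((\<Sum>x\<in>X. ov x v) - (\<Sum>x\<in>X. oc x))"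
  unfolding phi_def beta_def sum_lv by (simp add: algebra_simps)

lemma phi_G: assumes "NC" shows "phi (char_imset G) = beta"
proof -
  have c: "cross (char_imset G) = 0"
  proof -
    have "2 * ci G (W x y) - ci G {i,x,y} = 0" if "x \<in> X" "y \<in> X - {x}" for x y
      using K1[OF agree_G that(1)] K2[OF agree_G X_Ss[OF that(1)]] that hG xi_G X_Ss by auto
    thus ?thesis by (simp add: cross_def)
  qed
  have "(\<Sum>x\<in>X. ell x (char_imset G)) = 0" using valsG[OF _ assms] by simp
  moreover have "(\<Sum>x\<in>X. ov x (char_imset G)) = (\<Sum>x\<in>X. oc x)" using valsG[OF _ assms] by simp
  ultimately show ?thesis using phi_alt[of "char_imset G"] c by simp
qed

lemma phi_H: assumes "NC" shows "phi (char_imset H) = beta"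
proof -
  have c: "cross (char_imset H) = real m * (real m - 1)"
  proof -
    have t: "2 * ci H (W x y) - ci H {i,x,y} = 1" if "x \<in> X" "y \<in> X - {x}" for x y
      using K1[OF agree_H that(1)] K2[OF agree_H X_Ss[OF that(1)]] that hH xi_H X_Ss by auto
    have "cross (char_imset H) = (\<Sum>x\<in>X. \<Sum>y\<in>X-{x}. (1::real))"
      unfolding cross_def by (rule sum.cong[OF refl], rule sum.cong[OF refl]) (use t in auto)
    also have "\<dots> = (\<Sum>x\<in>X. real m - 1)"
    proof (rule sum.cong[OF refl])
      fix x assume x: "x \<in> X"
      have c1: "card (X - {x}) = card X - 1" using x by (simp add: card_Diff_singleton)
      have c2: "1 \<le> card X" using x card_gt_0_iff[of X] by fastforce
      show "(\<Sum>y\<in>X-{x}. (1::real)) = real m - 1" using c1 c2 by (simp add: m_def of_nat_diff)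
    qed
    also have "\<dots> = real m * (real m - 1)" by (simp add: m_def)
    finally show ?thesis .
  qed
  have "(\<Sum>x\<in>X. ell x (char_imset H)) = real m" using valsH[OF _ assms] by (simp add: m_def)
  moreover have "(\<Sum>x\<in>X. ov x (char_imset H)) = (\<Sum>x\<in>X. oc x)" using valsH[OF _ assms] by simp
  ultimately show ?thesis using phi_alt[of "char_imset H"] c by (simp add: algebra_simps)
qed

end


context cim_setup begin

lemma G_vals:
  shows D1G: "c \<in> C \<Longrightarrow> ci G {i,c} = 0" and D1H: "c \<in> C \<Longrightarrow> ci H {i,c} = 1"
    and D2G: "x \<in> X \<Longrightarrow> y \<in> X \<Longrightarrow> x \<noteq> y \<Longrightarrow> ci G {i,x,y} = 0"
    and D2H: "x \<in> X \<Longrightarrow> y \<in> X \<Longrightarrow> x \<noteq> y \<Longrightarrow> ci H {i,x,y} = 1"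
    and D3G: "x \<in> X \<Longrightarrow> p \<in> Px x \<Longrightarrow> ci G {i,x,p} = 0"
    and D3H: "x \<in> X \<Longrightarrow> p \<in> Px x \<Longrightarrow> ci H {i,x,p} = 1"
    and D5G: "b \<in> X \<Longrightarrow> b \<notin> C \<Longrightarrow> r \<in> U b \<Longrightarrow> ci G {i,b,r} = 1"
    and D5H: "b \<in> X \<Longrightarrow> b \<notin> C \<Longrightarrow> r \<in> U b \<Longrightarrow> ci H {i,b,r} = 0"
proof -
  show "c \<in> C \<Longrightarrow> ci G {i,c} = 0" using K7[of c G] C_nadj C_sub by auto
  show "c \<in> C \<Longrightarrow> ci H {i,c} = 1" using K7[of c H] adj_H_i[of c] C_sub X_ne_i X_Ss by auto
  show "x \<in> X \<Longrightarrow> y \<in> X \<Longrightarrow> x \<noteq> y \<Longrightarrow> ci G {i,x,y} = 0" using K2[OF agree_G] X_Ss xi_G by simp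
  show "x \<in> X \<Longrightarrow> y \<in> X \<Longrightarrow> x \<noteq> y \<Longrightarrow> ci H {i,x,y} = 1" using K2[OF agree_H] X_Ss xi_H by simp
  show "x \<in> X \<Longrightarrow> p \<in> Px x \<Longrightarrow> ci G {i,x,p} = 0" using K3[OF agree_G] xi_G by simp
  show "x \<in> X \<Longrightarrow> p \<in> Px x \<Longrightarrow> ci H {i,x,p} = 1" using K3[OF agree_H] xi_H X_Ss pi_H Px_P by simp
  show "b \<in> X \<Longrightarrow> b \<notin> C \<Longrightarrow> r \<in> U b \<Longrightarrow> ci G {i,b,r} = 1" using K5[OF agree_G] iB_G U_props by simp
  show "b \<in> X \<Longrightarrow> b \<notin> C \<Longrightarrow> r \<in> U b \<Longrightarrow> ci H {i,b,r} = 0" using K5[OF agree_H] iB_H by simp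
qed

lemma main_core:
  assumes E: "agree E" and nc: "NC" and Xne: "X \<noteq> {}"
  shows "phi (char_imset E) \<le> beta \<and>
     (phi (char_imset E) = beta \<longrightarrow> char_imset E = char_imset G \<or> char_imset E = char_imset H)"
proof -
  let ?v = "char_imset E"
  define K where "K = {x\<in>X. h E x}"
  define k where "k = card K"
  have xp: "\<And>x. x \<in> X \<Longrightarrow> xprops x E" using xprops_all[OF E _ nc] .
  have KX: "K \<subseteq> X" by (auto simp: K_def)
  have km: "k \<le> m" using KX by (simp add: k_def m_def card_mono)
  have "0 < card X" using Xne card_gt_0_iff[of X] by simp
  hence m1: "1 \<le> m" by (simp add: m_def)
  define wt where "wt x y = ci E (W x y)" for x y
  define ct where "ct x y = 2 * ci E (W x y) - ci E {i,x,y}" for x y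
  have wt_val: "wt x y = (if h E x \<and> h E y then 1 else 0)" if "x \<in> X" "y \<in> X - {x}" for x y
  proof -
    have "y \<in> X" "x \<noteq> y" using that by auto
    thus ?thesis using K1[OF E that(1)] by (simp add: wt_def)
  qed
  have ct_le: "ct x y \<le> wt x y" if xy: "x \<in> X" "y \<in> X - {x}" for x y
  proof -
    have "wt x y \<le> ci E {i,x,y}"
      using wt_val[OF xy] K2[OF E X_Ss[OF xy(1)]] xy X_Ss by (auto simp: h_def)
    thus ?thesis by (simp add: ct_def wt_def)
  qed
  define Sw where "Sw = (\<Sum>x\<in>X. \<Sum>y\<in>X-{x}. wt x y)"
  have inner: "(\<Sum>y\<in>X-{x}. wt x y) = (if h E x then real k - 1 else 0)" if x: "x \<in> X" for x
  proof (cases "h E x")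
    case True
    have "(\<Sum>y\<in>X-{x}. wt x y) = (\<Sum>y\<in>X-{x}. if h E y then 1 else 0)"
      using wt_val[OF x] True by (intro sum.cong) auto
    also have "\<dots> = real (card {y\<in>X-{x}. h E y})" by (rule count_real) simp
    also have "{y\<in>X-{x}. h E y} = K - {x}" by (auto simp: K_def)
    also have "real (card (K - {x})) = real k - 1"
    proof -
      have xK: "x \<in> K" using x True by (simp add: K_def)
      hence "1 \<le> card K" using card_gt_0_iff[of K] by fastforce
      thus ?thesis using xK by (simp add: k_def card_Diff_singleton of_nat_diff)
    qed
    finally show ?thesis using True by simp
  next
    case False
    thus ?thesis using wt_val[OF x] by simp
  qed
  have Sw_val: "Sw = real k * (real k - 1)"
  proof -
    have "Sw = (\<Sum>x\<in>X. if h E x then real k - 1 else 0)" unfolding Sw_def using inner by (intro sum.cong) auto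
    also have "\<dots> = (\<Sum>x\<in>K. real k - 1)" unfolding K_def by (rule sum.inter_filter[symmetric]) simp
    also have "\<dots> = real k * (real k - 1)" by (simp add: k_def)
    finally show ?thesis .
  qed
  have cross_le: "cross ?v \<le> Sw"
    unfolding cross_def Sw_def using ct_le by (intro sum_mono) (simp add: ct_def)
  define Sl where "Sl = (\<Sum>x\<in>X. ell x ?v)"
  have hk: "(\<Sum>x\<in>X. if h E x then (1::real) else 0) = real k"
    using count_real[of X "h E"] by (simp add: K_def k_def)
  have ell_ge: "(if h E x then (1::real) else 0) \<le> ell x ?v" if "x \<in> X" for x
    using xp[OF that] by (auto simp: xprops_def)
  have Sl_ge: "real k \<le> Sl" unfolding Sl_def hk[symmetric] using ell_ge by (intro sum_mono) auto
  have ov_le: "(\<Sum>x\<in>X. ov x ?v) \<le> (\<Sum>x\<in>X. oc x)"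
    using xp by (intro sum_mono) (auto simp: xprops_def)
  have alt: "phi ?v - beta = cross ?v - (real m - 1) * Sl + ((\<Sum>x\<in>X. ov x ?v) - (\<Sum>x\<in>X. oc x))"
    using phi_alt by (simp add: Sl_def)
  have mm: "0 \<le> real m - 1" using m1 by simp
  have t2: "(real m - 1) * real k \<le> (real m - 1) * Sl" using mult_left_mono[OF Sl_ge mm] .
  have kk: "real k * (real k - 1) - (real m - 1) * real k = real k * (real k - real m)" by (simp add: algebra_simps)
  have kle: "real k * (real k - real m) \<le> 0" using km by (simp add: mult_nonneg_nonpos)
  have mid: "Sw - (real m - 1) * Sl \<le> 0" using Sw_val t2 kk kle by linarith
  have ineq: "phi ?v \<le> beta" using alt cross_le mid ov_le by linarith
  have eqcase: "char_imset E = char_imset G \<or> char_imset E = char_imset H" if eq: "phi ?v = beta"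
  proof -
    have e1: "cross ?v = Sw" using alt cross_le mid ov_le eq by linarith
    have e2: "Sw = (real m - 1) * Sl" using alt cross_le mid ov_le eq by linarith
    have e3: "(\<Sum>x\<in>X. ov x ?v) = (\<Sum>x\<in>X. oc x)" using alt cross_le mid ov_le eq by linarith
    have kz: "real k * (real k - real m) = 0" using e2 Sw_val t2 kk kle by linarith
    hence kcase: "k = 0 \<or> k = m" by simp
    have k2: "real k * real k = real k * real m" using kz by (simp add: algebra_simps)
    have e5: "(real m - 1) * Sl = real k * real k - real k" using e2 Sw_val by (simp add: algebra_simps)
    have e4: "(real m - 1) * (Sl - real k) = 0"
      using e5 k2 by (simp add: algebra_simps)
    have ownx: "own x E" if "x \<in> X" for x
    proof -
      have "\<forall>x\<in>X. ov x ?v = oc x" using sum_le_eq[of X "\<lambda>x. ov x ?v" oc] xp e3 by (simp add: xprops_def)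
      thus ?thesis using xp[OF that] that by (simp add: xprops_def)
    qed
    have pairs: "ci E {i,x,y} = ci E (W x y)" if xy: "x \<in> X" "y \<in> X - {x}" for x y
    proof -
      have le_out: "(\<Sum>y\<in>X-{x}. ct x y) \<le> (\<Sum>y\<in>X-{x}. wt x y)" if "x \<in> X" for x
        using ct_le that by (intro sum_mono) auto
      have seq: "(\<Sum>x\<in>X. \<Sum>y\<in>X-{x}. ct x y) = (\<Sum>x\<in>X. \<Sum>y\<in>X-{x}. wt x y)"
        using e1 by (simp add: cross_def Sw_def ct_def)
      have fX: "finite X" by simp
      have "\<forall>x\<in>X. (\<Sum>y\<in>X-{x}. ct x y) = (\<Sum>y\<in>X-{x}. wt x y)"
        by (rule sum_le_eq[OF fX le_out seq])
      hence "\<forall>y\<in>X-{x}. ct x y = wt x y" using sum_le_eq[of "X-{x}" "ct x" "wt x"] ct_le xy(1) by simp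
      thus ?thesis using xy(2) by (simp add: ct_def wt_def)
    qed
    define s where "s = (\<forall>x\<in>X. ell x ?v = 1)"
    have ell01: "ell x ?v = 0 \<or> ell x ?v = 1" if "x \<in> X" for x using xp[OF that] by (simp add: xprops_def)
    have hs: "m \<noteq> 1 \<Longrightarrow> x \<in> X \<Longrightarrow> (h E x \<longleftrightarrow> s) \<and> ell x ?v = (if s then 1 else 0)" for x
    proof -
      assume m: "m \<noteq> 1" and x: "x \<in> X"
      have "Sl = real k" using e4 m m1 by simp
      hence "\<forall>x\<in>X. (if h E x then (1::real) else 0) = ell x ?v"
        using sum_le_eq[of X "\<lambda>x. if h E x then (1::real) else 0" "\<lambda>x. ell x ?v"] ell_ge hk by (simp add: Sl_def)
      hence ellh: "\<forall>x\<in>X. ell x ?v = (if h E x then 1 else 0)" by (metis)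
      from kcase show ?thesis
      proof
        assume "k = 0"
        hence "K = {}" by (simp add: k_def)
        hence nh: "\<forall>x\<in>X. \<not> h E x" by (auto simp: K_def)
        hence "\<not> s" using Xne ellh by (auto simp: s_def)
        thus ?thesis using nh ellh x by simp
      next
        assume "k = m"
        hence "K = X" using KX by (simp add: k_def m_def card_subset_eq)
        hence ah: "\<forall>x\<in>X. h E x" by (auto simp: K_def)
        hence "s" using ellh by (simp add: s_def)
        thus ?thesis using ah ellh x by simp
      qed
    qed
    have ells: "ell x ?v = (if s then 1 else 0)" if x: "x \<in> X" for x
    proof (cases "m = 1")
      case True
      then obtain x0 where "X = {x0}" using card_1_singletonE by (metis m_def)
      thus ?thesis using x ell01[OF x] by (auto simp: s_def)
    next
      case False thus ?thesis using hs x by simp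
    qed
    have pairval: "ci E {i,x,y} = (if s then 1 else 0)" if xy: "x \<in> X" "y \<in> X" "x \<noteq> y" for x y
    proof -
      have "2 \<le> card X" using card_ge2[OF xy] .
      hence m: "m \<noteq> 1" by (simp add: m_def)
      have "ci E {i,x,y} = wt x y" using pairs[of x y] xy by (simp add: wt_def)
      also have "\<dots> = (if h E x \<and> h E y then 1 else 0)" using wt_val[of x y] xy by simp
      finally show ?thesis using hs[OF m xy(1)] hs[OF m xy(2)] by simp
    qed
    have pat: "ci E S = (if s then ci H S else ci G S)" if card: "card S = 2 \<or> card S = 3" for S
    proof (cases "S \<in> Com")
      case True
      hence "ci E S = ci G S" "ci G S = ci H S" using E by (auto simp: agree_def Com_def)
      thus ?thesis by simp
    next
      case False
      have "Dform S" using classify[OF card False] .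
      thus ?thesis unfolding Dform_def
      proof (elim disjE bexE conjE)
        fix c assume c: "c \<in> C" and S: "S = {i,c}"
        have cX: "c \<in> X" using c C_sub by blast
        have "ci E {i,c} = ell c ?v" using ownx[OF cX] c by (simp add: own_def)
        thus ?thesis using S ells[OF cX] D1G[OF c] D1H[OF c] by simp
      next
        fix x y assume "x \<in> X" "y \<in> X" "x \<noteq> y" "S = {i,x,y}"
        thus ?thesis using pairval D2G D2H by simp
      next
        fix x p assume x: "x \<in> X" and p: "p \<in> Px x" and S: "S = {i,x,p}"
        have "ci E {i,x,p} = ell x ?v" using ownx[OF x] p Px_P[OF p] by (simp add: own_def)
        thus ?thesis using S ells[OF x] D3G[OF x p] D3H[OF x p] by simp
      next
        fix c p assume c: "c \<in> C" and p: "p \<in> P" and a: "adj G c p" and S: "S = {i,c,p}"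
        have cX: "c \<in> X" using c C_sub by blast
        have "ci E {i,c,p} = ell c ?v" using ownx[OF cX] c p by (simp add: own_def)
        thus ?thesis using S ells[OF cX] D4_G[OF c p] D4_H[OF c p a] by simp
      next
        fix b r assume b: "b \<in> X" "b \<notin> C" and r: "r \<in> U b" and S: "S = {i,b,r}"
        have "ci E {i,b,r} = 1 - ell b ?v" using ownx[OF b(1)] b r by (simp add: own_def)
        thus ?thesis using S ells[OF b(1)] D5G[OF b r] D5H[OF b r] by simp
      qed
    qed
    show ?thesis
    proof (cases s)
      case True
      have "char_imset E = char_imset H"
        by (rule ci_eq_from_23[OF agree_acyc[OF E] dH]) (use pat True in simp)
      thus ?thesis by simp
    next
      case False
      have "char_imset E = char_imset G"
        by (rule ci_eq_from_23[OF agree_acyc[OF E] dG]) (use pat False in simp)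
      thus ?thesis by simp
    qed
  qed
  show ?thesis using ineq eqcase by blast
qed

end


definition ev :: "'a::finite \<Rightarrow> real^'a" where "ev S = axis S 1"

lemma inner_ev: "inner (ev S) v = v $ S"
  by (simp add: ev_def inner_axis')

context cim_setup begin

definition "lvV x = (if x \<in> C then ev {i,x} else if U x \<noteq> {} then - ev (Sb x) else ev (Vb x))"
definition "ovV x = (if x \<in> C then (\<Sum>p\<in>P. if adj G x p then ev {i,x} - ev {i,x,p} else ev {i,x,p} - ev {i,x})
   else if U x \<noteq> {} then (\<Sum>r\<in>U x. ev (Sb x) - ev {i,x,r}) + (\<Sum>p\<in>Px x. ev {i,x,p} + ev (Sb x))
   else (\<Sum>p\<in>Px x. ev (Vb x) - ev {i,x,p}))"
definition "crossV = (\<Sum>x\<in>X. \<Sum>y\<in>X-{x}. 2 *\<^sub>R ev (W x y) - ev {i,x,y})"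
definition "phiV = crossV - (real m - 1) *\<^sub>R (\<Sum>x\<in>X. lvV x) + (\<Sum>x\<in>X. ovV x)"

lemma inner_lvV: "inner (lvV x) v = lv x v"
  by (simp add: lvV_def lv_def inner_ev)

lemma inner_ovV: "inner (ovV x) v = ov x v"
proof -
  have a: "inner (\<Sum>p\<in>P. if adj G x p then ev {i,x} - ev {i,x,p} else ev {i,x,p} - ev {i,x}) v =
      (\<Sum>p\<in>P. if adj G x p then v$({i,x}) - v$({i,x,p}) else v$({i,x,p}) - v$({i,x}))"
    by (simp add: inner_sum_left inner_diff_left inner_ev if_distrib[of "\<lambda>t. inner t v"] cong: if_cong)
  have b: "inner ((\<Sum>r\<in>U x. ev (Sb x) - ev {i,x,r}) + (\<Sum>p\<in>Px x. ev {i,x,p} + ev (Sb x))) v =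
      (\<Sum>r\<in>U x. v$(Sb x) - v$({i,x,r})) + (\<Sum>p\<in>Px x. v$({i,x,p}) + v$(Sb x))"
    by (simp add: inner_sum_left inner_diff_left inner_add_left inner_ev)
  have c: "inner (\<Sum>p\<in>Px x. ev (Vb x) - ev {i,x,p}) v = (\<Sum>p\<in>Px x. v$(Vb x) - v$({i,x,p}))"
    by (simp add: inner_sum_left inner_diff_left inner_ev)
  show ?thesis unfolding ovV_def ov_def using a b c by simp
qed

lemma inner_crossV: "inner crossV v = cross v"
  by (simp add: crossV_def cross_def inner_sum_left inner_diff_left inner_ev)

lemma inner_phiV: "inner phiV v = phi v"
  by (simp add: phiV_def phi_def inner_diff_left inner_add_left inner_sum_left inner_crossV inner_lvV inner_ovV)

definition "agV = (\<Sum>S\<in>Com. (if ci G S = 1 then 1 else -1) *\<^sub>R ev S)"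
definition "ag v = (\<Sum>S\<in>Com. if ci G S = 1 then v$S else - v$S)"

lemma inner_agV: "inner agV v = ag v"
  unfolding agV_def ag_def by (simp add: inner_sum_left inner_ev) (rule sum.cong, auto)

lemma ag_agree:
  assumes "is_dag E"
  shows "ag (char_imset E) \<le> ag (char_imset G)"
    "\<not> agree E \<Longrightarrow> ag (char_imset E) \<le> ag (char_imset G) - 1"
    "agree E \<Longrightarrow> ag (char_imset E) = ag (char_imset G)"
proof -
  define t where "t S = (if ci G S = 1 then ci G S else - ci G S) - (if ci G S = 1 then ci E S else - ci E S)" for S
  have t0: "0 \<le> t S" for S using ci01[of G S] ci01[of E S] by (auto simp: t_def)
  have diff: "ag (char_imset G) - ag (char_imset E) = (\<Sum>S\<in>Com. t S)"
    by (simp add: ag_def t_def sum_subtractf)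
  show "ag (char_imset E) \<le> ag (char_imset G)" using diff t0 sum_nonneg[of Com t] by simp
  show "\<not> agree E \<Longrightarrow> ag (char_imset E) \<le> ag (char_imset G) - 1"
  proof -
    assume na: "\<not> agree E"
    have ac: "acyclic E" using assms by (simp add: is_dag_def)
    then obtain S where S: "S \<in> Com" "ci E S \<noteq> ci G S" using na by (auto simp: agree_def)
    have "1 \<le> t S" using S(2) ci01[of G S] ci01[of E S] by (auto simp: t_def)
    moreover have "t S \<le> (\<Sum>S\<in>Com. t S)" by (rule member_le_sum[OF S(1)]) (use t0 in auto)
    ultimately show ?thesis using diff by simp
  qed
  show "agree E \<Longrightarrow> ag (char_imset E) = ag (char_imset G)"
  proof -
    assume "agree E"
    hence "\<forall>S\<in>Com. ci E S = ci G S" by (simp add: agree_def)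
    thus ?thesis unfolding ag_def by (intro sum.cong) auto
  qed
qed

theorem edge_nc:
  assumes nc: "NC" and ne: "char_imset G \<noteq> char_imset H"
  shows "is_edge_of (convex hull {char_imset G, char_imset H}) CIM"
proof -
  define V where "V = {char_imset E | E :: ('n \<times> 'n) set. is_dag E}"
  have CIMV: "CIM = convex hull V" by (simp add: CIM_def V_def)
  have finV: "finite V"
  proof -
    have "V \<subseteq> range char_imset" by (auto simp: V_def)
    moreover have "finite (range (char_imset :: ('n \<times> 'n) set \<Rightarrow> real^('n set)))" by simp
    ultimately show ?thesis by (rule finite_subset)
  qed
  have GV: "char_imset G \<in> V" "char_imset H \<in> V" using dG dH by (auto simp: V_def is_dag_def)
  have Xne: "X \<noteq> {}"
  proof
    assume X0: "X = {}"
    have "H = G"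
    proof (rule set_eqI, clarify)
      fix u v
      have SsP: "\<And>z. z \<in> Ss \<Longrightarrow> (z,i) \<in> G" using X0 by (auto simp: X_iff)
      show "((u,v) \<in> H) = ((u,v) \<in> G)"
        using SsP acyc_asym[OF dG] by (auto simp: H_iff)
    qed
    thus False using ne by simp
  qed
  define d where "d w = phi w - beta" for w
  define M where "M = 1 + Max (d ` V)"
  have dmax: "d w \<le> Max (d ` V)" if "w \<in> V" for w using finV that by simp
  have M0: "0 \<le> M"
  proof -
    have "d (char_imset G) = 0" using phi_G[OF nc] by (simp add: d_def)
    thus ?thesis using dmax[OF GV(1)] by (simp add: M_def)
  qed
  define a where "a = M *\<^sub>R agV + phiV"
  define b where "b = M * ag (char_imset G) + beta"
  have av: "inner a w = M * ag w + phi w" for w by (simp add: a_def inner_add_left inner_agV inner_phiV)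
  have key: "inner a w \<le> b \<and> (inner a w = b \<longrightarrow> w = char_imset G \<or> w = char_imset H)" if w: "w \<in> V" for w
  proof -
    obtain E where E: "w = char_imset E" "is_dag E" using w by (auto simp: V_def)
    show ?thesis
    proof (cases "agree E")
      case True
      have "ag w = ag (char_imset G)" using ag_agree(3)[OF E(2) True] E(1) by simp
      moreover have "phi w \<le> beta \<and> (phi w = beta \<longrightarrow> w = char_imset G \<or> w = char_imset H)"
        using main_core[OF True nc Xne] E(1) by simp
      ultimately show ?thesis using av[of w] by (auto simp: b_def)
    next
      case False
      have "ag w \<le> ag (char_imset G) - 1" using ag_agree(2)[OF E(2) False] E(1) by simp
      hence "M * ag w \<le> M * (ag (char_imset G) - 1)" using M0 by (simp add: mult_left_mono)
      moreover have "phi w - beta < M" using dmax[OF w] by (simp add: M_def d_def)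
      ultimately have "inner a w < b" using av[of w] by (simp add: b_def algebra_simps)
      thus ?thesis by simp
    qed
  qed
  have aG: "inner a (char_imset G) = b" using av phi_G[OF nc] by (simp add: b_def)
  have aH: "inner a (char_imset H) = b"
  proof -
    have "agree H" by (rule agree_H)
    hence "ag (char_imset H) = ag (char_imset G)" using ag_agree(3)[of H] dH by (simp add: is_dag_def)
    thus ?thesis using av phi_H[OF nc] by (simp add: b_def)
  qed
  have le: "\<And>x. x \<in> CIM \<Longrightarrow> inner a x \<le> b"
  proof -
    have "V \<subseteq> {x. inner a x \<le> b}" using key by auto
    hence "convex hull V \<subseteq> {x. inner a x \<le> b}" by (rule hull_minimal) (rule convex_halfspace_le)
    thus "\<And>x. x \<in> CIM \<Longrightarrow> inner a x \<le> b" using CIMV by auto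
  qed
  have "(convex hull V \<inter> {x. inner a x = b}) face_of convex hull V"
    by (rule face_of_Int_supporting_hyperplane_le[OF convex_convex_hull]) (use le CIMV in auto)
  hence face: "(CIM \<inter> {x. inner a x = b}) face_of CIM" using CIMV by simp
  have eq: "CIM \<inter> {x. inner a x = b} = convex hull {char_imset G, char_imset H}"
  proof
    show "convex hull {char_imset G, char_imset H} \<subseteq> CIM \<inter> {x. inner a x = b}"
    proof -
      have "{char_imset G, char_imset H} \<subseteq> V" using GV by simp
      hence "convex hull {char_imset G, char_imset H} \<subseteq> CIM" unfolding CIMV by (rule hull_mono)
      moreover have "convex hull {char_imset G, char_imset H} \<subseteq> {x. inner a x = b}"
        using aG aH by (intro hull_minimal) (auto simp: convex_hyperplane)
      ultimately show ?thesis by (rule Int_greatest)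
    qed
  next
    show "CIM \<inter> {x. inner a x = b} \<subseteq> convex hull {char_imset G, char_imset H}"
    proof -
      have f2: "(CIM \<inter> {x. inner a x = b}) face_of convex hull V" using face CIMV by simp
      obtain S' where S': "S' \<subseteq> V" "CIM \<inter> {x. inner a x = b} = convex hull S'"
        using face_of_convex_hull_subset[OF finite_imp_compact[OF finV] f2] by metis
      have "S' \<subseteq> {char_imset G, char_imset H}"
      proof
        fix w assume w: "w \<in> S'"
        have "S' \<subseteq> convex hull S'" by (rule hull_subset)
        hence "w \<in> CIM \<inter> {x. inner a x = b}" using S'(2) w by auto
        hence "inner a w = b" by simp
        moreover have "w \<in> V" using S'(1) w by auto
        ultimately show "w \<in> {char_imset G, char_imset H}" using key[of w] by simp
      qed
      thus ?thesis using S'(2) by (simp add: hull_mono)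
    qed
  qed
  have "aff_dim (convex hull {char_imset G, char_imset H}) = 1"
    using ne by (simp add: aff_dim_convex_hull)
  thus ?thesis using face eq by (simp add: is_edge_of_def)
qed

end


lemma covered_rev:
  fixes G :: "('n::finite \<times> 'n) set"
  assumes dG: "acyclic G" and ib: "(i,b) \<in> G" and cov: "pa G b = pa G i \<union> {i}"
    and G'def: "G' = insert (b,i) (G - {(i,b)})"
  shows "acyclic G' \<and> char_imset G' = char_imset G"
proof -
  have bi: "b \<noteq> i" using ib acyc_irrefl[OF dG] by auto
  have iP: "i \<notin> pa G i" using acyc_irrefl[OF dG] by (simp add: pa_def)
  have pa': "pa G' k = (if k = i then pa G i \<union> {b} else if k = b then pa G b - {i} else pa G k)" for k
    using bi by (auto simp: pa_def G'def)
  have famiff: "fam G' S \<longleftrightarrow> fam G S" for S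
  proof
    assume "fam G' S"
    then obtain k where k: "k \<in> S" "S \<subseteq> pa G' k \<union> {k}" unfolding fam_def by blast
    show "fam G S"
    proof (cases "k = i")
      case True
      hence Ssub: "S \<subseteq> pa G i \<union> {b} \<union> {i}" using k(2) pa' by simp
      show ?thesis
      proof (cases "b \<in> S")
        case True
        have "S \<subseteq> pa G b \<union> {b}" using Ssub cov by auto
        thus ?thesis using True unfolding fam_def by blast
      next
        case False
        have "S \<subseteq> pa G i \<union> {i}" using Ssub False by auto
        thus ?thesis using k(1) \<open>k = i\<close> unfolding fam_def by blast
      qed
    next
      case ki: False
      show ?thesis
      proof (cases "k = b")
        case True
        have "S \<subseteq> pa G b \<union> {b}" using k(2) pa'[of k] True bi by auto
        thus ?thesis using k(1) True unfolding fam_def by blast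
      next
        case False
        have "S \<subseteq> pa G k \<union> {k}" using k(2) pa'[of k] False ki by auto
        thus ?thesis using k(1) unfolding fam_def by blast
      qed
    qed
  next
    assume "fam G S"
    then obtain k where k: "k \<in> S" "S \<subseteq> pa G k \<union> {k}" unfolding fam_def by blast
    show "fam G' S"
    proof (cases "k = i")
      case True
      have "S \<subseteq> pa G' i \<union> {i}" using k(2) True pa'[of i] by auto
      thus ?thesis using k(1) True unfolding fam_def by blast
    next
      case ki: False
      show ?thesis
      proof (cases "k = b")
        case True
        have Ssub: "S \<subseteq> pa G i \<union> {i} \<union> {b}" using k(2) True cov by auto
        show ?thesis
        proof (cases "i \<in> S")
          case True
          have "S \<subseteq> pa G' i \<union> {i}" using Ssub pa'[of i] by auto
          thus ?thesis using True unfolding fam_def by blast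
        next
          case False
          have "S \<subseteq> pa G' b \<union> {b}" using Ssub False pa'[of b] bi cov iP by auto
          thus ?thesis using k(1) \<open>k = b\<close> unfolding fam_def by blast
        qed
      next
        case False
        have "S \<subseteq> pa G' k \<union> {k}" using k(2) pa'[of k] False ki by auto
        thus ?thesis using k(1) unfolding fam_def by blast
      qed
    qed
  qed
  have ceq: "char_imset G' = char_imset G" using famiff by (simp add: vec_eq_iff ci_nth)
  define R where "R = G - {(i,b)}"
  have acR: "acyclic R" using acyclic_subset[OF dG] by (auto simp: R_def)
  have nR: "(i,b) \<notin> R\<^sup>*"
  proof
    assume "(i,b) \<in> R\<^sup>*"
    hence "(i,b) \<in> R\<^sup>+" using bi by (auto simp: rtrancl_eq_or_trancl)
    then obtain z where z: "(i,z) \<in> R\<^sup>*" "(z,b) \<in> R" using tranclD2 by metis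
    have "z \<in> pa G b" using z(2) by (simp add: R_def pa_def)
    moreover have "z \<noteq> i" using z(2) by (auto simp: R_def)
    ultimately have zi: "(z,i) \<in> G" using cov by (auto simp: pa_def)
    have "(i,z) \<in> G\<^sup>*" using z(1) rtrancl_mono[of R G] by (auto simp: R_def)
    hence "(i,i) \<in> G\<^sup>+" using zi by (rule rtrancl_into_trancl1)
    thus False using dG unfolding acyclic_def by blast
  qed
  have "acyclic G'" using acR nR by (simp add: G'def R_def[symmetric])
  thus ?thesis using ceq by simp
qed



theorem mainTheorem6:
  fixes G :: "('n::finite \<times> 'n) set" and i :: 'n and Sstar :: "'n set"
  assumes "i \<notin> Sstar"
    and "is_dag G"
    and "\<forall>a\<in>Sstar. \<forall>b\<in>Sstar. (a, b) \<notin> G"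
    and "H = (G - {(i, j) | j. j \<in> Sstar}) \<union> {(j, i) | j. j \<in> Sstar}"
    and "is_dag H"
    and "char_imset G \<noteq> char_imset H"
  shows "is_edge_of (convex hull {char_imset G, char_imset H}) CIM"
proof -
  interpret cim_setup G i Sstar H
    using assms by unfold_locales (simp_all add: is_dag_def)
  show ?thesis
  proof (cases NC)
    case True
    thus ?thesis using edge_nc assms(6) by blast
  next
    case False
    then obtain b where b: "b \<in> X" "b \<notin> C" "U b = {}" "Px b = {}" by (auto simp: NC_def)
    have ib: "(i,b) \<in> G" using B_edge[OF b(1,2)] .
    have cov: "pa G b = pa G i \<union> {i}"
    proof
      show "pa G b \<subseteq> pa G i \<union> {i}"
      proof
        fix z assume z: "z \<in> pa G b"
        show "z \<in> pa G i \<union> {i}"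
        proof (rule ccontr)
          assume "z \<notin> pa G i \<union> {i}"
          hence "z \<in> U b" using z by (auto simp: U_def P_def)
          thus False using b(3) by simp
        qed
      qed
    next
      show "pa G i \<union> {i} \<subseteq> pa G b"
      proof
        fix z assume z: "z \<in> pa G i \<union> {i}"
        show "z \<in> pa G b"
        proof (cases "z = i")
          case True thus ?thesis using ib by (simp add: pa_def)
        next
          case False
          hence zP: "z \<in> P" using z by (simp add: P_def)
          hence "adj G b z" using b(4) by (auto simp: Px_def)
          moreover have "(b,z) \<notin> G"
          proof
            assume bz: "(b,z) \<in> G"
            have zi: "(z,i) \<in> G" using zP by (simp add: P_iff)
            have "(i,i) \<in> G\<^sup>+" using ib bz zi by (meson r_into_trancl trancl_into_trancl)
            thus False using dG unfolding acyclic_def by blast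
          qed
          ultimately show ?thesis by (simp add: adj_def pa_def)
        qed
      qed
    qed
    define G' where "G' = insert (b,i) (G - {(i,b)})"
    have cr: "acyclic G' \<and> char_imset G' = char_imset G" by (rule covered_rev[OF dG ib cov G'_def])
    have bS: "b \<in> Sstar" using b(1) by (simp add: X_iff)
    have bi: "b \<noteq> i" using X_ne_i[OF b(1)] .
    have H': "H = (G' - {(i, j) | j. j \<in> Sstar}) \<union> {(j, i) | j. j \<in> Sstar}"
      using assms(4) bS bi by (auto simp: G'_def)
    have edge': "\<forall>a\<in>Sstar. \<forall>c\<in>Sstar. (a, c) \<notin> G'"
      using assms(3) assms(1) by (auto simp: G'_def)
    interpret G': cim_setup G' i Sstar H
      using assms(1) cr edge' H' dH by unfold_locales simp_all
    have nc': "G'.NC"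
      unfolding G'.NC_def
    proof (intro ballI impI)
      fix x assume x: "x \<in> G'.X" "x \<notin> G'.C"
      have bP': "b \<in> G'.P" unfolding G'.P_iff by (simp add: G'_def)
      have xS: "x \<in> Sstar" using x(1) by (simp add: G'.X_iff)
      have xb: "x \<noteq> b" using x(1) bP' by (auto simp: G'.X_def)
      have xi: "x \<noteq> i" using xS assms(1) by auto
      have "\<not> adj G' x b" using xb xi assms(3) xS bS by (auto simp: adj_def G'_def)
      hence "b \<in> G'.Px x" using bP' by (simp add: G'.Px_def)
      thus "G'.U x \<noteq> {} \<or> G'.Px x \<noteq> {}" by blast
    qed
    have ne': "char_imset G' \<noteq> char_imset H" using cr assms(6) by simp
    have "is_edge_of (convex hull {char_imset G', char_imset H}) CIM" by (rule G'.edge_nc[OF nc' ne'])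
    thus ?thesis using cr by simp
  qed
qed


end
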